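(* Let $K$ be a perfect field and let $M/K$ be obtained by strong cluster magnification from $L/K$ through a finite Galois extension $F/K$. Let $S$ be the set of distinct fields isomorphic to $L$ over $K$ and let $B=\{L_{i_1},\dots,L_{i_m}\}\subseteq S$. Then $B$ is a minimal generating set of the Galois closure of $L/K$ if and only if $B'=\{L_{i_1}F,\dots,L_{i_m}F\}$ is a minimal generating set of the Galois closure of $M/K$. In this case $|B|=|B'|$.
   Context: $\bar K$ is a fixed algebraic closure of $K$; $\tilde E$ denotes the Galois closure in $\bar K$ of a finite extension $E/K$. $M/K$ is obtained by strong cluster magnification from a subextension $L/K$ through a finite Galois extension $F/K$ if $[L:K]>2$, $\tilde L\cap F=K$ and $M=LF$; then the distinct fields isomorphic to $M$ over $K$ are exactly the fields $EF$ with $E\in S$. For an extension $E/K$, let $S_E$ be the set of distinct subfields of $\bar K$ isomorphic to $E$ over $K$; a subset $B\subseteq S_E$ is a minimal generating set of $\tilde E$ if the compositum of the fields in $B$ is $\tilde E$, while the compositum of the fields in any proper subset of $B$ is not $\tilde E$. *)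

theory Defs
  imports "HOL-Computational_Algebra.Polynomial"
begin

text \<open>All fields are subfields of an ambient field of type 'a, which will be
assumed to be an algebraic closure of the base field K.\<close>

definition subfield :: "'a::field set \<Rightarrow> bool" where
  "subfield F \<longleftrightarrow> 0 \<in> F \<and> 1 \<in> F \<and>
     (\<forall>x\<in>F. \<forall>y\<in>F. x + y \<in> F \<and> x * y \<in> F) \<and>
     (\<forall>x\<in>F. - x \<in> F) \<and> (\<forall>x\<in>F. x \<noteq> 0 \<longrightarrow> inverse x \<in> F)"

definition perfect_subfield :: "'a::field set \<Rightarrow> bool" where
  "perfect_subfield K \<longleftrightarrow> subfield K \<and>
     (CHAR('a) = 0 \<or> (\<forall>x\<in>K. \<exists>y\<in>K. y ^ CHAR('a) = x))"

definition alg_closed_type :: "'a::field itself \<Rightarrow> bool" where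
  "alg_closed_type _ \<longleftrightarrow> (\<forall>p::'a poly. degree p > 0 \<longrightarrow> (\<exists>x. poly p x = 0))"

definition algebraic_over :: "'a::field set \<Rightarrow> 'a \<Rightarrow> bool" where
  "algebraic_over K x \<longleftrightarrow> (\<exists>p. p \<noteq> 0 \<and> (\<forall>i. coeff p i \<in> K) \<and> poly p x = 0)"

definition is_alg_closure_of :: "'a::field set \<Rightarrow> bool" where
  "is_alg_closure_of K \<longleftrightarrow> subfield K \<and> alg_closed_type TYPE('a) \<and> (\<forall>x. algebraic_over K x)"

definition lin_indep_over :: "'a::field set \<Rightarrow> 'a set \<Rightarrow> bool" where
  "lin_indep_over K S \<longleftrightarrow> (\<forall>T c. finite T \<longrightarrow> T \<subseteq> S \<longrightarrow> (\<forall>x\<in>T. c x \<in> K) \<longrightarrow>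
      (\<Sum>x\<in>T. c x * x) = 0 \<longrightarrow> (\<forall>x\<in>T. c x = 0))"

definition span_over :: "'a::field set \<Rightarrow> 'a set \<Rightarrow> 'a set" where
  "span_over K S = {(\<Sum>x\<in>T. c x * x) | T c. finite T \<and> T \<subseteq> S \<and> (\<forall>x\<in>T. c x \<in> K)}"

definition is_basis_over :: "'a::field set \<Rightarrow> 'a set \<Rightarrow> 'a set \<Rightarrow> bool" where
  "is_basis_over K L B \<longleftrightarrow> B \<subseteq> L \<and> lin_indep_over K B \<and> span_over K B = L"

definition finite_ext :: "'a::field set \<Rightarrow> 'a set \<Rightarrow> bool" where
  "finite_ext K L \<longleftrightarrow> subfield K \<and> subfield L \<and> K \<subseteq> L \<and> (\<exists>B. finite B \<and> is_basis_over K L B)"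

definition ext_degree :: "'a::field set \<Rightarrow> 'a set \<Rightarrow> nat" where
  "ext_degree K L = (if finite_ext K L then card (SOME B. finite B \<and> is_basis_over K L B) else 0)"

definition K_iso :: "'a::field set \<Rightarrow> ('a \<Rightarrow> 'a) \<Rightarrow> 'a set \<Rightarrow> 'a set \<Rightarrow> bool" where
  "K_iso K \<sigma> E E' \<longleftrightarrow> bij_betw \<sigma> E E' \<and> \<sigma> 1 = 1 \<and>
     (\<forall>x\<in>E. \<forall>y\<in>E. \<sigma> (x + y) = \<sigma> x + \<sigma> y \<and> \<sigma> (x * y) = \<sigma> x * \<sigma> y) \<and>
     (\<forall>x\<in>K. \<sigma> x = x)"

definition conj_fields :: "'a::field set \<Rightarrow> 'a set \<Rightarrow> 'a set set" where
  "conj_fields K E = {E'. subfield E' \<and> K \<subseteq> E' \<and> (\<exists>\<sigma>. K_iso K \<sigma> E E')}"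

definition compositum :: "'a::field set \<Rightarrow> 'a set set \<Rightarrow> 'a set" where
  "compositum K \<B> = \<Inter>{F. subfield F \<and> K \<subseteq> F \<and> \<Union>\<B> \<subseteq> F}"

definition galois_ext :: "'a::field set \<Rightarrow> 'a set \<Rightarrow> bool" where
  "galois_ext K F \<longleftrightarrow> finite_ext K F \<and>
     {x\<in>F. \<forall>\<sigma>. K_iso K \<sigma> F F \<longrightarrow> \<sigma> x = x} = K"

definition galois_closure :: "'a::field set \<Rightarrow> 'a set \<Rightarrow> 'a set" where
  "galois_closure K E = \<Inter>{G. subfield G \<and> E \<subseteq> G \<and> galois_ext K G}"

definition strong_cluster_magnification ::
  "'a::field set \<Rightarrow> 'a set \<Rightarrow> 'a set \<Rightarrow> 'a set \<Rightarrow> bool" where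
  "strong_cluster_magnification K L F M \<longleftrightarrow>
     finite_ext K L \<and> galois_ext K F \<and> ext_degree K L > 2 \<and>
     galois_closure K L \<inter> F = K \<and> M = compositum K {L, F}"

definition minimal_generating_set :: "'a::field set \<Rightarrow> 'a set \<Rightarrow> 'a set set \<Rightarrow> bool" where
  "minimal_generating_set K E B \<longleftrightarrow> B \<subseteq> conj_fields K E \<and>
     compositum K B = galois_closure K E \<and>
     (\<forall>B'. B' \<subset> B \<longrightarrow> compositum K B' \<noteq> galois_closure K E)"

end

theory Submission
  imports Defs "HOL-Computational_Algebra.Primes"
begin


section \<open>Subfields\<close>

lemma sf_0: "subfield E \<Longrightarrow> 0 \<in> E" by (simp add: subfield_def)
lemma sf_1: "subfield E \<Longrightarrow> 1 \<in> E" by (simp add: subfield_def)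
lemma sf_add: "subfield E \<Longrightarrow> x \<in> E \<Longrightarrow> y \<in> E \<Longrightarrow> x + y \<in> E" by (simp add: subfield_def)
lemma sf_mult: "subfield E \<Longrightarrow> x \<in> E \<Longrightarrow> y \<in> E \<Longrightarrow> x * y \<in> E" by (simp add: subfield_def)
lemma sf_uminus: "subfield E \<Longrightarrow> x \<in> E \<Longrightarrow> - x \<in> E" by (simp add: subfield_def)
lemma sf_inverse: "subfield (E::'a::field set) \<Longrightarrow> x \<in> E \<Longrightarrow> inverse x \<in> E"
  by (cases "x = 0") (auto simp add: subfield_def)
lemma sf_diff: "subfield E \<Longrightarrow> x \<in> E \<Longrightarrow> y \<in> E \<Longrightarrow> x - y \<in> E"
  using sf_add[of E x "-y"] sf_uminus[of E y] by simp
lemma sf_divide: "subfield (E::'a::field set) \<Longrightarrow> x \<in> E \<Longrightarrow> y \<in> E \<Longrightarrow> x / y \<in> E"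
  using sf_mult[of E x "inverse y"] sf_inverse[of E y] by (simp add: divide_inverse)
lemma sf_power: "subfield E \<Longrightarrow> x \<in> E \<Longrightarrow> x ^ n \<in> E"
  by (induction n) (auto intro: sf_1 sf_mult)
lemma sf_sum: "subfield E \<Longrightarrow> (\<And>i. i \<in> I \<Longrightarrow> f i \<in> E) \<Longrightarrow> sum f I \<in> E"
  by (induction I rule: infinite_finite_induct) (auto intro: sf_0 sf_add)
lemma sf_prod: "subfield E \<Longrightarrow> (\<And>i. i \<in> I \<Longrightarrow> f i \<in> E) \<Longrightarrow> prod f I \<in> E"
  by (induction I rule: infinite_finite_induct) (auto intro: sf_1 sf_mult)
lemma sf_of_nat: "subfield E \<Longrightarrow> of_nat n \<in> E"
  by (induction n) (auto intro: sf_0 sf_1 sf_add)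

lemmas sf_closed = sf_0 sf_1 sf_add sf_mult sf_uminus sf_inverse sf_diff sf_divide sf_power sf_of_nat

lemma subfield_UNIV: "subfield (UNIV :: 'a::field set)"
  by (simp add: subfield_def)

lemma subfield_Inter: "(\<And>F. F \<in> \<F> \<Longrightarrow> subfield F) \<Longrightarrow> subfield (\<Inter>\<F>)"
  by (auto simp add: subfield_def)

lemma subfield_Int: "subfield A \<Longrightarrow> subfield B \<Longrightarrow> subfield (A \<inter> B)"
  by (auto simp add: subfield_def)

definition gen :: "'a::field set \<Rightarrow> 'a set \<Rightarrow> 'a set" where
  "gen E S = \<Inter>{F. subfield F \<and> E \<subseteq> F \<and> S \<subseteq> F}"

lemma gen_subfield: "subfield (gen E S)"
  unfolding gen_def by (rule subfield_Inter) auto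

lemma gen_base: "E \<subseteq> gen E S" unfolding gen_def by auto
lemma gen_gens: "S \<subseteq> gen E S" unfolding gen_def by auto
lemma gen_least: "subfield F \<Longrightarrow> E \<subseteq> F \<Longrightarrow> S \<subseteq> F \<Longrightarrow> gen E S \<subseteq> F"
  unfolding gen_def by auto

lemma compositum_gen: "compositum K B = gen K (\<Union>B)"
  unfolding compositum_def gen_def by simp

lemma gen_mono: "E \<subseteq> E' \<Longrightarrow> S \<subseteq> S' \<Longrightarrow> gen E S \<subseteq> gen E' S'"
  unfolding gen_def by blast

lemma gen_eq_self: "subfield F \<Longrightarrow> E \<subseteq> F \<Longrightarrow> S \<subseteq> F \<Longrightarrow> F \<subseteq> gen E S \<Longrightarrow> gen E S = F"
  using gen_least by blast

section \<open>Homomorphisms\<close>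

definition hom_on :: "'a::field set \<Rightarrow> ('a \<Rightarrow> 'a) \<Rightarrow> bool" where
  "hom_on E \<sigma> \<longleftrightarrow> \<sigma> 1 = 1 \<and> (\<forall>x\<in>E. \<forall>y\<in>E. \<sigma> (x + y) = \<sigma> x + \<sigma> y \<and> \<sigma> (x * y) = \<sigma> x * \<sigma> y)"

lemma hom_1: "hom_on E \<sigma> \<Longrightarrow> \<sigma> 1 = 1" by (simp add: hom_on_def)
lemma hom_add: "hom_on E \<sigma> \<Longrightarrow> x \<in> E \<Longrightarrow> y \<in> E \<Longrightarrow> \<sigma> (x + y) = \<sigma> x + \<sigma> y" by (simp add: hom_on_def)
lemma hom_mult: "hom_on E \<sigma> \<Longrightarrow> x \<in> E \<Longrightarrow> y \<in> E \<Longrightarrow> \<sigma> (x * y) = \<sigma> x * \<sigma> y" by (simp add: hom_on_def)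

lemma hom_mono: "hom_on E \<sigma> \<Longrightarrow> E' \<subseteq> E \<Longrightarrow> hom_on E' \<sigma>"
  unfolding hom_on_def by blast

lemma hom_cong: "hom_on E \<sigma> \<Longrightarrow> subfield E \<Longrightarrow> (\<And>x. x \<in> E \<Longrightarrow> \<tau> x = \<sigma> x) \<Longrightarrow> hom_on E \<tau>"
  unfolding hom_on_def using sf_1[of E] sf_add[of E] sf_mult[of E] by simp

context
  fixes E :: "'a::field set" and \<sigma>
  assumes sf: "subfield E" and hom: "hom_on E \<sigma>"
begin

lemma hom_0: "\<sigma> 0 = 0"
proof -
  have "\<sigma> (0 + 0) = \<sigma> 0 + \<sigma> 0" using hom_add[OF hom] sf_0[OF sf] by blast
  hence "\<sigma> 0 + \<sigma> 0 = \<sigma> 0 + 0" by simp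
  thus ?thesis by (metis add_left_cancel)
qed

lemma hom_uminus: "x \<in> E \<Longrightarrow> \<sigma> (- x) = - \<sigma> x"
proof -
  assume x: "x \<in> E"
  have "\<sigma> (x + - x) = \<sigma> x + \<sigma> (- x)" using hom_add[OF hom x sf_uminus[OF sf x]] .
  hence "\<sigma> x + \<sigma> (- x) = 0" using hom_0 by simp
  thus ?thesis by (metis add.commute eq_neg_iff_add_eq_0)
qed

lemma hom_diff: "x \<in> E \<Longrightarrow> y \<in> E \<Longrightarrow> \<sigma> (x - y) = \<sigma> x - \<sigma> y"
  using hom_add[OF hom, of x "-y"] hom_uminus[of y] sf_uminus[OF sf, of y] by simp

lemma hom_inverse: "x \<in> E \<Longrightarrow> \<sigma> (inverse x) = inverse (\<sigma> x)"
proof (cases "x = 0")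
  case True thus ?thesis using hom_0 by simp
next
  case False
  assume x: "x \<in> E"
  have "\<sigma> (x * inverse x) = \<sigma> x * \<sigma> (inverse x)" using hom_mult[OF hom x sf_inverse[OF sf x]] .
  hence "\<sigma> x * \<sigma> (inverse x) = 1" using False hom_1[OF hom] by simp
  thus ?thesis by (metis inverse_unique)
qed

lemma hom_divide: "x \<in> E \<Longrightarrow> y \<in> E \<Longrightarrow> \<sigma> (x / y) = \<sigma> x / \<sigma> y"
  using hom_mult[OF hom, of x "inverse y"] hom_inverse[of y] sf_inverse[OF sf, of y]
  by (simp add: divide_inverse)

lemma hom_eq_0_iff: "x \<in> E \<Longrightarrow> \<sigma> x = 0 \<longleftrightarrow> x = 0"
proof
  assume x: "x \<in> E" and z: "\<sigma> x = 0"
  show "x = 0"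
  proof (rule ccontr)
    assume "x \<noteq> 0"
    have "\<sigma> (x * inverse x) = \<sigma> x * \<sigma> (inverse x)" using hom_mult[OF hom x sf_inverse[OF sf x]] .
    thus False using z \<open>x \<noteq> 0\<close> hom_1[OF hom] by simp
  qed
qed (simp add: hom_0)

lemma hom_inj: "inj_on \<sigma> E"
proof (rule inj_onI)
  fix x y assume "x \<in> E" "y \<in> E" "\<sigma> x = \<sigma> y"
  hence "\<sigma> (x - y) = 0" using hom_diff by simp
  thus "x = y" using hom_eq_0_iff sf_diff[OF sf \<open>x\<in>E\<close> \<open>y\<in>E\<close>] by simp
qed

lemma hom_power: "x \<in> E \<Longrightarrow> \<sigma> (x ^ n) = \<sigma> x ^ n"
  by (induction n) (auto simp: hom_1[OF hom] hom_mult[OF hom] sf_power[OF sf])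

lemma hom_sum: "(\<And>i. i \<in> I \<Longrightarrow> f i \<in> E) \<Longrightarrow> \<sigma> (sum f I) = (\<Sum>i\<in>I. \<sigma> (f i))"
  by (induction I rule: infinite_finite_induct) (auto simp: hom_0 hom_add[OF hom] sf_sum[OF sf])

lemma hom_prod: "(\<And>i. i \<in> I \<Longrightarrow> f i \<in> E) \<Longrightarrow> \<sigma> (prod f I) = (\<Prod>i\<in>I. \<sigma> (f i))"
  by (induction I rule: infinite_finite_induct) (auto simp: hom_1[OF hom] hom_mult[OF hom] sf_prod[OF sf])

lemma hom_of_nat: "\<sigma> (of_nat n) = of_nat n"
  by (induction n) (auto simp: hom_0 hom_1[OF hom] hom_add[OF hom] sf_of_nat[OF sf] sf_1[OF sf])

lemma hom_image_subfield: "subfield (\<sigma> ` E)"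
  unfolding subfield_def
proof (intro conjI ballI impI)
  show "0 \<in> \<sigma> ` E" using hom_0 sf_0[OF sf] by force
  show "1 \<in> \<sigma> ` E" using hom_1[OF hom] sf_1[OF sf] by force
  fix x y assume "x \<in> \<sigma> ` E" "y \<in> \<sigma> ` E"
  then obtain a b where ab: "a \<in> E" "b \<in> E" "x = \<sigma> a" "y = \<sigma> b" by blast
  show "x + y \<in> \<sigma> ` E" using ab hom_add[OF hom] sf_add[OF sf] by (metis image_eqI)
  show "x * y \<in> \<sigma> ` E" using ab hom_mult[OF hom] sf_mult[OF sf] by (metis image_eqI)
next
  fix x assume "x \<in> \<sigma> ` E"
  then obtain a where ab: "a \<in> E" "x = \<sigma> a" by blast
  show "- x \<in> \<sigma> ` E" using ab hom_uminus sf_uminus[OF sf] by (metis image_eqI)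
  show "inverse x \<in> \<sigma> ` E" using ab hom_inverse sf_inverse[OF sf] by (metis image_eqI)
qed

end

section \<open>Polynomials with coefficients in a subfield\<close>

definition Epoly :: "'a::field set \<Rightarrow> 'a poly \<Rightarrow> bool" where
  "Epoly E p \<longleftrightarrow> (\<forall>i. coeff p i \<in> E)"

context
  fixes E :: "'a::field set"
  assumes sf: "subfield E"
begin

lemma Epoly_0: "Epoly E 0" using sf_0[OF sf] by (simp add: Epoly_def)
lemma Epoly_const: "c \<in> E \<Longrightarrow> Epoly E [:c:]" using sf_0[OF sf] by (simp add: Epoly_def coeff_pCons split: nat.split)
lemma Epoly_1: "Epoly E 1" using Epoly_const[OF sf_1[OF sf]] by (simp add: one_pCons)
lemma Epoly_pCons: "c \<in> E \<Longrightarrow> Epoly E p \<Longrightarrow> Epoly E (pCons c p)"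
  by (simp add: Epoly_def coeff_pCons split: nat.split)
lemma Epoly_add: "Epoly E p \<Longrightarrow> Epoly E q \<Longrightarrow> Epoly E (p + q)"
  by (simp add: Epoly_def sf_add[OF sf])
lemma Epoly_uminus: "Epoly E p \<Longrightarrow> Epoly E (- p)"
  by (simp add: Epoly_def sf_uminus[OF sf])
lemma Epoly_diff: "Epoly E p \<Longrightarrow> Epoly E q \<Longrightarrow> Epoly E (p - q)"
  by (simp add: Epoly_def sf_diff[OF sf])
lemma Epoly_mult: "Epoly E p \<Longrightarrow> Epoly E q \<Longrightarrow> Epoly E (p * q)"
  by (simp add: Epoly_def coeff_mult sf_sum[OF sf] sf_mult[OF sf])
lemma Epoly_smult: "c \<in> E \<Longrightarrow> Epoly E p \<Longrightarrow> Epoly E (smult c p)"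
  by (simp add: Epoly_def sf_mult[OF sf])
lemma Epoly_monom: "c \<in> E \<Longrightarrow> Epoly E (monom c n)"
  by (simp add: Epoly_def coeff_monom sf_0[OF sf])
lemma Epoly_X: "Epoly E [:0,1:]"
  by (intro Epoly_pCons Epoly_const sf_0[OF sf] sf_1[OF sf])
lemma Epoly_power: "Epoly E p \<Longrightarrow> Epoly E (p ^ n)"
  by (induction n) (auto intro: Epoly_1 Epoly_mult)
lemma Epoly_prod: "(\<And>i. i \<in> I \<Longrightarrow> Epoly E (f i)) \<Longrightarrow> Epoly E (prod f I)"
  by (induction I rule: infinite_finite_induct) (auto intro: Epoly_1 Epoly_mult)
lemma Epoly_pderiv: "Epoly E p \<Longrightarrow> Epoly E (pderiv p)"
  by (simp add: Epoly_def coeff_pderiv sf_mult[OF sf] sf_of_nat[OF sf] sf_add[OF sf] sf_1[OF sf])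
lemma Epoly_poly: "Epoly E p \<Longrightarrow> x \<in> E \<Longrightarrow> poly p x \<in> E"
  by (simp add: Epoly_def poly_altdef sf_sum[OF sf] sf_mult[OF sf] sf_power[OF sf])

end

lemma Epoly_mono: "Epoly E p \<Longrightarrow> E \<subseteq> E' \<Longrightarrow> Epoly E' p"
  by (auto simp add: Epoly_def)

lemma poly_sum_le: "degree p \<le> n \<Longrightarrow> poly p x = (\<Sum>i\<le>n. coeff p i * x ^ i)"
  for x :: "'a::comm_ring_1"
proof -
  assume d: "degree p \<le> n"
  have "poly p x = (\<Sum>i\<le>degree p. coeff p i * x ^ i)" by (simp add: poly_altdef)
  also have "\<dots> = (\<Sum>i\<le>n. coeff p i * x ^ i)"
    by (rule sum.mono_neutral_left) (use d in \<open>auto simp: coeff_eq_0\<close>)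
  finally show ?thesis .
qed

context
  fixes E :: "'a::field set" and \<sigma>
  assumes sf: "subfield E" and hom: "hom_on E \<sigma>"
begin

lemma coeff_map_hom: "coeff (map_poly \<sigma> p) i = \<sigma> (coeff p i)"
  by (simp add: coeff_map_poly hom_0[OF sf hom])

lemma degree_map_poly_le: "degree (map_poly \<sigma> p) \<le> degree p"
  by (rule degree_le) (simp add: coeff_map_hom coeff_eq_0 hom_0[OF sf hom])

lemma degree_map_hom: "Epoly E p \<Longrightarrow> degree (map_poly \<sigma> p) = degree p"
proof -
  assume p: "Epoly E p"
  show ?thesis
  proof (rule antisym)
    show "degree (map_poly \<sigma> p) \<le> degree p" by (rule degree_map_poly_le)
    show "degree p \<le> degree (map_poly \<sigma> p)"
    proof (cases "p = 0")
      case False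
      have "coeff (map_poly \<sigma> p) (degree p) \<noteq> 0"
        using False p hom_eq_0_iff[OF sf hom] by (simp add: coeff_map_hom Epoly_def)
      thus ?thesis by (rule le_degree)
    qed simp
  qed
qed

lemma Epoly_map_hom: "Epoly E p \<Longrightarrow> Epoly (\<sigma> ` E) (map_poly \<sigma> p)"
  by (simp add: Epoly_def coeff_map_hom)

lemma map_hom_add: "Epoly E p \<Longrightarrow> Epoly E q \<Longrightarrow> map_poly \<sigma> (p + q) = map_poly \<sigma> p + map_poly \<sigma> q"
  by (rule poly_eqI) (simp add: coeff_map_hom hom_add[OF hom] Epoly_def)

lemma map_hom_diff: "Epoly E p \<Longrightarrow> Epoly E q \<Longrightarrow> map_poly \<sigma> (p - q) = map_poly \<sigma> p - map_poly \<sigma> q"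
  by (rule poly_eqI) (simp add: coeff_map_hom hom_diff[OF sf hom] Epoly_def)

lemma map_hom_mult: "Epoly E p \<Longrightarrow> Epoly E q \<Longrightarrow> map_poly \<sigma> (p * q) = map_poly \<sigma> p * map_poly \<sigma> q"
  by (rule poly_eqI) (simp add: coeff_map_hom coeff_mult hom_sum[OF sf hom] hom_mult[OF hom]
        Epoly_def sf_mult[OF sf])

lemma map_hom_prod: "(\<And>i. i \<in> I \<Longrightarrow> Epoly E (f i)) \<Longrightarrow> map_poly \<sigma> (prod f I) = (\<Prod>i\<in>I. map_poly \<sigma> (f i))"
proof (induction I rule: infinite_finite_induct)
  case (empty) thus ?case by (simp add: hom_1[OF hom] hom_0[OF sf hom])
next
  case (infinite) thus ?case by (simp add: hom_1[OF hom] hom_0[OF sf hom])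
next
  case (insert i I)
  thus ?case by (simp add: map_hom_mult Epoly_prod[OF sf])
qed

lemma poly_map_hom: "Epoly E p \<Longrightarrow> x \<in> E \<Longrightarrow> poly (map_poly \<sigma> p) (\<sigma> x) = \<sigma> (poly p x)"
proof -
  assume p: "Epoly E p" and x: "x \<in> E"
  have "poly (map_poly \<sigma> p) (\<sigma> x) = (\<Sum>i\<le>degree p. coeff (map_poly \<sigma> p) i * \<sigma> x ^ i)"
    by (rule poly_sum_le) (rule degree_map_poly_le)
  also have "\<dots> = (\<Sum>i\<le>degree p. \<sigma> (coeff p i * x ^ i))"
    using p x by (simp add: coeff_map_hom hom_mult[OF hom] hom_power[OF sf hom] Epoly_def sf_power[OF sf])
  also have "\<dots> = \<sigma> (poly p x)"
    using p x by (simp add: poly_altdef hom_sum[OF sf hom] Epoly_def sf_mult[OF sf] sf_power[OF sf])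
  finally show ?thesis .
qed

end

lemma map_poly_fix:
  assumes "\<And>i. \<sigma> (coeff p i) = coeff p i" shows "map_poly \<sigma> p = p"
proof -
  have "\<sigma> 0 = 0" using assms[of "Suc (degree p)"] by (simp add: coeff_eq_0)
  thus ?thesis by (intro poly_eqI) (simp add: coeff_map_poly assms)
qed


lemma Epoly_divmod:
  fixes E :: "'a::field set"
  assumes sf: "subfield E" and m: "Epoly E m" "m \<noteq> 0"
  shows "Epoly E p \<Longrightarrow> \<exists>q r. Epoly E q \<and> Epoly E r \<and> p = q * m + r \<and> (r = 0 \<or> degree r < degree m)"
proof (induction "degree p" arbitrary: p rule: less_induct)
  case less
  show ?case
  proof (cases "p = 0 \<or> degree p < degree m")
    case True
    thus ?thesis using less.prems Epoly_0[OF sf] by (intro exI[of _ 0] exI[of _ p]) auto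
  next
    case False
    hence p0: "p \<noteq> 0" and dge: "degree m \<le> degree p" by auto
    define c where "c = lead_coeff p / lead_coeff m"
    define d where "d = degree p - degree m"
    define p' where "p' = p - monom c d * m"
    have cE: "c \<in> E" unfolding c_def using less.prems m by (simp add: Epoly_def sf_divide[OF sf])
    have mE: "Epoly E (monom c d)" by (rule Epoly_monom[OF sf cE])
    have p'E: "Epoly E p'" unfolding p'_def
      by (intro Epoly_diff[OF sf] Epoly_mult[OF sf] less.prems mE m)
    have dd: "degree p = d + degree m" using dge d_def by simp
    have deg_mm: "degree (monom c d * m) \<le> degree p"
      using degree_mult_le[of "monom c d" m] degree_monom_le[of c d] dd by simp
    have "coeff (monom c d * m) (degree p) = c * lead_coeff m"
      by (simp add: dd coeff_monom_mult)
    also have "\<dots> = lead_coeff p" using m(2) by (simp add: c_def)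
    finally have cf: "coeff p' (degree p) = 0" by (simp add: p'_def)
    have degp': "degree p' \<le> degree p"
      unfolding p'_def using deg_mm degree_diff_le by blast
    show ?thesis
    proof (cases "p' = 0")
      case True
      hence "p = monom c d * m + 0" by (simp add: p'_def)
      thus ?thesis using mE Epoly_0[OF sf] by blast
    next
      case False
      have "degree p' \<noteq> degree p" using cf False by (metis leading_coeff_0_iff)
      hence "degree p' < degree p" using degp' by simp
      then obtain q r where qr: "Epoly E q" "Epoly E r" "p' = q * m + r" "r = 0 \<or> degree r < degree m"
        using less.hyps p'E by blast
      have "p = (q + monom c d) * m + r" using qr(3) by (simp add: p'_def algebra_simps)
      thus ?thesis using qr Epoly_add[OF sf qr(1) mE] by blast
    qed
  qed
qed

section \<open>Minimal polynomials\<close>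

definition alg :: "'a::field set \<Rightarrow> 'a \<Rightarrow> bool" where
  "alg E x \<longleftrightarrow> (\<exists>p. Epoly E p \<and> p \<noteq> 0 \<and> poly p x = 0)"

lemma alg_mono: "alg E x \<Longrightarrow> E \<subseteq> E' \<Longrightarrow> alg E' x"
  unfolding alg_def using Epoly_mono by blast

lemma algebraic_over_alg: "algebraic_over K x = alg K x"
  unfolding algebraic_over_def alg_def Epoly_def by blast

definition minpoly :: "'a::field set \<Rightarrow> 'a \<Rightarrow> 'a poly" where
  "minpoly E x = (SOME m. Epoly E m \<and> m \<noteq> 0 \<and> lead_coeff m = 1 \<and> poly m x = 0 \<and>
      (\<forall>q. Epoly E q \<and> q \<noteq> 0 \<and> poly q x = 0 \<longrightarrow> degree m \<le> degree q))"

context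
  fixes E :: "'a::field set" and x :: 'a
  assumes sf: "subfield E" and al: "alg E x"
begin

lemma minpoly_ex: "\<exists>m. Epoly E m \<and> m \<noteq> 0 \<and> lead_coeff m = 1 \<and> poly m x = 0 \<and>
      (\<forall>q. Epoly E q \<and> q \<noteq> 0 \<and> poly q x = 0 \<longrightarrow> degree m \<le> degree q)"
proof -
  define P where "P = (\<lambda>n. \<exists>q. Epoly E q \<and> q \<noteq> 0 \<and> poly q x = 0 \<and> degree q = n)"
  have "\<exists>n. P n" using al unfolding alg_def P_def by blast
  then obtain n where Pn: "P n" and nmin: "\<And>k. P k \<Longrightarrow> n \<le> k" by (metis Least_le LeastI)
  then obtain q where q: "Epoly E q" "q \<noteq> 0" "poly q x = 0" "degree q = n" unfolding P_def by blast
  define m where "m = smult (inverse (lead_coeff q)) q"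
  have "Epoly E m" unfolding m_def using q(1)
    by (intro Epoly_smult[OF sf] sf_inverse[OF sf]) (auto simp: Epoly_def)
  moreover have "m \<noteq> 0" using q(2) by (simp add: m_def)
  moreover have "lead_coeff m = 1" using q(2) by (simp add: m_def)
  moreover have "poly m x = 0" using q(3) by (simp add: m_def)
  moreover have "\<forall>q'. Epoly E q' \<and> q' \<noteq> 0 \<and> poly q' x = 0 \<longrightarrow> degree m \<le> degree q'"
    using nmin q(4) unfolding P_def m_def by (auto simp: degree_smult_eq)
  ultimately show ?thesis by blast
qed

lemma minpoly_props: "Epoly E (minpoly E x) \<and> minpoly E x \<noteq> 0 \<and> lead_coeff (minpoly E x) = 1 \<and>
    poly (minpoly E x) x = 0 \<and>
    (\<forall>q. Epoly E q \<and> q \<noteq> 0 \<and> poly q x = 0 \<longrightarrow> degree (minpoly E x) \<le> degree q)"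
  unfolding minpoly_def by (rule someI_ex[OF minpoly_ex])

lemma mp_Epoly: "Epoly E (minpoly E x)" using minpoly_props by blast
lemma mp_nz: "minpoly E x \<noteq> 0" using minpoly_props by blast
lemma mp_monic: "lead_coeff (minpoly E x) = 1" using minpoly_props by blast
lemma mp_root: "poly (minpoly E x) x = 0" using minpoly_props by blast
lemma mp_min: "Epoly E q \<Longrightarrow> q \<noteq> 0 \<Longrightarrow> poly q x = 0 \<Longrightarrow> degree (minpoly E x) \<le> degree q"
  using minpoly_props by blast

lemma mp_deg_pos: "degree (minpoly E x) > 0"
proof (rule ccontr)
  assume "\<not> ?thesis"
  hence "degree (minpoly E x) = 0" by simp
  hence "[:coeff (minpoly E x) 0:] = minpoly E x" by (rule degree_0_id)
  moreover have "coeff (minpoly E x) 0 = 1" using mp_monic \<open>degree (minpoly E x) = 0\<close> by simp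
  ultimately have "minpoly E x = 1" by (simp add: one_pCons)
  thus False using mp_root by simp
qed

lemma mp_dvd: "Epoly E p \<Longrightarrow> poly p x = 0 \<Longrightarrow> \<exists>k. Epoly E k \<and> p = k * minpoly E x"
proof -
  assume p: "Epoly E p" "poly p x = 0"
  obtain q r where qr: "Epoly E q" "Epoly E r" "p = q * minpoly E x + r" "r = 0 \<or> degree r < degree (minpoly E x)"
    using Epoly_divmod[OF sf mp_Epoly mp_nz p(1)] by blast
  have "poly r x = 0" using p(2) qr(3) mp_root by simp
  hence "r = 0" using qr(2,4) mp_min[of r] by force
  thus ?thesis using qr by auto
qed

lemma mp_irred: "Epoly E a \<Longrightarrow> Epoly E b \<Longrightarrow> minpoly E x = a * b \<Longrightarrow> degree a = 0 \<or> degree b = 0"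
proof -
  assume ab: "Epoly E a" "Epoly E b" "minpoly E x = a * b"
  have nz: "a \<noteq> 0" "b \<noteq> 0" using ab(3) mp_nz by auto
  have dd: "degree (minpoly E x) = degree a + degree b" using ab(3) nz by (simp add: degree_mult_eq)
  have "poly a x = 0 \<or> poly b x = 0" using ab(3) mp_root by simp
  thus ?thesis
  proof
    assume "poly a x = 0"
    hence "degree (minpoly E x) \<le> degree a" using mp_min ab(1) nz by blast
    thus ?thesis using dd by simp
  next
    assume "poly b x = 0"
    hence "degree (minpoly E x) \<le> degree b" using mp_min ab(2) nz by blast
    thus ?thesis using dd by simp
  qed
qed

lemma mp_deg1: "degree (minpoly E x) = 1 \<Longrightarrow> x \<in> E"
proof -
  assume d: "degree (minpoly E x) = 1"
  have "0 = poly (minpoly E x) x" using mp_root by simp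
  also have "\<dots> = coeff (minpoly E x) 0 + coeff (minpoly E x) 1 * x"
    using d by (simp add: poly_altdef)
  also have "coeff (minpoly E x) 1 = 1" using mp_monic d by simp
  finally have "x = - coeff (minpoly E x) 0" by (simp add: eq_neg_iff_add_eq_0 add.commute)
  moreover have "coeff (minpoly E x) 0 \<in> E" using mp_Epoly by (simp add: Epoly_def)
  ultimately show ?thesis using sf_uminus[OF sf] by metis
qed

lemma mp_in_deg1: "x \<in> E \<Longrightarrow> degree (minpoly E x) = 1"
proof -
  assume xE: "x \<in> E"
  have "Epoly E [:-x, 1:]" by (intro Epoly_pCons[OF sf] Epoly_const[OF sf] sf_uminus[OF sf] xE sf_1[OF sf])
  hence "degree (minpoly E x) \<le> 1" using mp_min[of "[:-x,1:]"] by simp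
  thus ?thesis using mp_deg_pos by simp
qed

end

section \<open>Simple extensions\<close>

definition adj :: "'a::field set \<Rightarrow> 'a \<Rightarrow> 'a set" where
  "adj E x = {poly p x | p. Epoly E p}"

context
  fixes E :: "'a::field set" and x :: 'a
  assumes sf: "subfield E" and al: "alg E x"
begin

lemma adj_inverse:
  assumes p: "Epoly E p" and nz: "poly p x \<noteq> 0"
  shows "inverse (poly p x) \<in> adj E x"
proof -
  define m where "m = minpoly E x"
  have mE: "Epoly E m" and mnz: "m \<noteq> 0" and mr: "poly m x = 0"
    using mp_Epoly[OF sf al] mp_nz[OF sf al] mp_root[OF sf al] by (auto simp: m_def)
  define I where "I = {a * p + b * m | a b. Epoly E a \<and> Epoly E b}"
  have IE: "g \<in> I \<Longrightarrow> Epoly E g" for g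
    unfolding I_def using Epoly_add[OF sf] Epoly_mult[OF sf] p mE by blast
  have mI: "m \<in> I" unfolding I_def using Epoly_0[OF sf] Epoly_1[OF sf]
    by (intro CollectI exI[of _ 0] exI[of _ 1]) simp
  define P where "P = (\<lambda>n. \<exists>g\<in>I. g \<noteq> 0 \<and> degree g = n)"
  have "P (degree m)" using mI mnz unfolding P_def by blast
  then obtain n where Pn: "P n" and nmin: "\<And>k. P k \<Longrightarrow> n \<le> k" by (metis Least_le LeastI)
  then obtain g where g: "g \<in> I" "g \<noteq> 0" "degree g = n" unfolding P_def by blast
  obtain a0 b0 where ab0: "Epoly E a0" "Epoly E b0" "g = a0 * p + b0 * m" using g(1) unfolding I_def by blast
  have divides: "\<exists>q. Epoly E q \<and> f = q * g" if fI: "f \<in> I" for f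
  proof -
    obtain q r where qr: "Epoly E q" "Epoly E r" "f = q * g + r" "r = 0 \<or> degree r < degree g"
      using Epoly_divmod[OF sf IE[OF g(1)] g(2) IE[OF fI]] by blast
    obtain a b where ab: "Epoly E a" "Epoly E b" "f = a * p + b * m" using fI unfolding I_def by blast
    have "r = (a - q * a0) * p + (b - q * b0) * m" using qr(3) ab(3) ab0(3) by (simp add: algebra_simps)
    moreover have "Epoly E (a - q * a0)" "Epoly E (b - q * b0)"
      using ab qr ab0 by (auto intro!: Epoly_diff[OF sf] Epoly_mult[OF sf])
    ultimately have "r \<in> I" unfolding I_def by blast
    hence "r = 0" using qr(4) nmin g(3) unfolding P_def by force
    thus ?thesis using qr by auto
  qed
  have pI: "p \<in> I" unfolding I_def using Epoly_0[OF sf] Epoly_1[OF sf]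
    by (intro CollectI exI[of _ 1] exI[of _ 0]) simp
  obtain q1 where q1: "Epoly E q1" "m = q1 * g" using divides[OF mI] by blast
  obtain q2 where q2: "Epoly E q2" "p = q2 * g" using divides[OF pI] by blast
  have "degree q1 = 0 \<or> degree g = 0" using mp_irred[OF sf al q1(1) IE[OF g(1)]] q1(2) by (simp add: m_def)
  moreover have "degree q1 \<noteq> 0"
  proof
    assume "degree q1 = 0"
    hence q1c: "[:coeff q1 0:] = q1" by (rule degree_0_id)
    have "poly q1 x = coeff q1 0" by (subst q1c[symmetric]) simp
    hence "poly m x = coeff q1 0 * poly g x" using q1(2) by simp
    moreover have "coeff q1 0 \<noteq> 0"
    proof
      assume "coeff q1 0 = 0"
      hence "q1 = 0" using q1c by simp
      thus False using q1(2) mnz by simp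
    qed
    ultimately have "poly g x = 0" using mr by simp
    hence "poly p x = 0" using q2(2) by simp
    thus False using nz by simp
  qed
  ultimately have "degree g = 0" by simp
  hence gc: "[:coeff g 0:] = g" by (rule degree_0_id)
  define c where "c = coeff g 0"
  have c0: "c \<noteq> 0"
  proof
    assume "c = 0" hence "g = 0" using gc c_def by simp
    thus False using g(2) by simp
  qed
  have cE: "c \<in> E" using IE[OF g(1)] by (simp add: Epoly_def c_def)
  have "c = poly g x" by (subst gc[symmetric]) (simp add: c_def)
  also have "\<dots> = poly a0 x * poly p x" using ab0(3) mr by simp
  finally have "inverse (poly p x) = poly (smult (inverse c) a0) x"
    using c0 nz by (simp add: field_simps)
  moreover have "Epoly E (smult (inverse c) a0)" by (intro Epoly_smult[OF sf] sf_inverse[OF sf] cE ab0(1))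
  ultimately show ?thesis unfolding adj_def by blast
qed

lemma adj_subfield: "subfield (adj E x)"
  unfolding subfield_def
proof (intro conjI ballI impI)
  show "0 \<in> adj E x" unfolding adj_def using Epoly_0[OF sf] by force
  show "1 \<in> adj E x" unfolding adj_def using Epoly_1[OF sf] by force
  fix a b assume "a \<in> adj E x" "b \<in> adj E x"
  then obtain p q where pq: "Epoly E p" "Epoly E q" "a = poly p x" "b = poly q x" unfolding adj_def by blast
  show "a + b \<in> adj E x" unfolding adj_def using pq Epoly_add[OF sf pq(1,2)] by (intro CollectI exI[of _ "p+q"]) simp
  show "a * b \<in> adj E x" unfolding adj_def using pq Epoly_mult[OF sf pq(1,2)] by (intro CollectI exI[of _ "p*q"]) simp
next
  fix a assume "a \<in> adj E x"
  then obtain p where p: "Epoly E p" "a = poly p x" unfolding adj_def by blast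
  show "- a \<in> adj E x" unfolding adj_def using p Epoly_uminus[OF sf p(1)] by (intro CollectI exI[of _ "-p"]) simp
  show "inverse a \<in> adj E x"
  proof (cases "a = 0")
    case True thus ?thesis unfolding adj_def using Epoly_0[OF sf] by force
  next
    case False thus ?thesis using adj_inverse p by simp
  qed
qed

lemma adj_base: "E \<subseteq> adj E x"
proof
  fix e assume "e \<in> E"
  thus "e \<in> adj E x" unfolding adj_def using Epoly_const[OF sf] by (intro CollectI exI[of _ "[:e:]"]) simp
qed

lemma adj_gen: "x \<in> adj E x"
  unfolding adj_def using Epoly_X[OF sf] by (intro CollectI exI[of _ "[:0,1:]"]) simp

lemma adj_least: "subfield F \<Longrightarrow> E \<subseteq> F \<Longrightarrow> x \<in> F \<Longrightarrow> adj E x \<subseteq> F"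
  unfolding adj_def using Epoly_poly Epoly_mono by blast

lemma gen_adj: "gen E {x} = adj E x"
proof (rule gen_eq_self[OF adj_subfield adj_base])
  show "{x} \<subseteq> adj E x" using adj_gen by simp
  show "adj E x \<subseteq> gen E {x}" using adj_least[OF gen_subfield gen_base] gen_gens by blast
qed

end

section \<open>Extension of homomorphisms\<close>

lemma map_poly_const_hom: "\<sigma> 0 = 0 \<Longrightarrow> map_poly \<sigma> [:c:] = [:\<sigma> c:]"
  by (rule poly_eqI) (simp add: coeff_map_poly coeff_pCons split: nat.split)

lemma extend1:
  fixes E :: "'a::field set"
  assumes sf: "subfield E" and al: "alg E x" and hom: "hom_on E \<sigma>"
    and y: "poly (map_poly \<sigma> (minpoly E x)) y = 0"
  shows "\<exists>\<tau>. hom_on (adj E x) \<tau> \<and> (\<forall>z\<in>E. \<tau> z = \<sigma> z) \<and> \<tau> x = y"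
proof -
  define m where "m = minpoly E x"
  have mE: "Epoly E m" and mr: "poly m x = 0" using mp_Epoly[OF sf al] mp_root[OF sf al] by (auto simp: m_def)
  define \<tau> where "\<tau> z = poly (map_poly \<sigma> (SOME p. Epoly E p \<and> poly p x = z)) y" for z
  have key: "\<tau> (poly p x) = poly (map_poly \<sigma> p) y" if p: "Epoly E p" for p
  proof -
    define p0 where "p0 = (SOME p'. Epoly E p' \<and> poly p' x = poly p x)"
    have p0: "Epoly E p0 \<and> poly p0 x = poly p x" unfolding p0_def by (rule someI[of _ p]) (use p in simp)
    have "Epoly E (p0 - p)" "poly (p0 - p) x = 0" using p0 p Epoly_diff[OF sf] by auto
    then obtain k where k: "Epoly E k" "p0 - p = k * m" using mp_dvd[OF sf al] m_def by blast
    have "map_poly \<sigma> p0 - map_poly \<sigma> p = map_poly \<sigma> k * map_poly \<sigma> m"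
      using map_hom_diff[OF sf hom, of p0 p] map_hom_mult[OF sf hom k(1) mE] k(2) p0 p by simp
    hence "poly (map_poly \<sigma> p0) y - poly (map_poly \<sigma> p) y = 0"
      using y m_def by (metis mult_zero_right poly_diff poly_mult)
    thus ?thesis unfolding \<tau>_def p0_def[symmetric] by simp
  qed
  have s0: "\<sigma> 0 = 0" by (rule hom_0[OF sf hom])
  have s1: "\<sigma> 1 = 1" by (rule hom_1[OF hom])
  have "hom_on (adj E x) \<tau>"
    unfolding hom_on_def
  proof (intro conjI ballI)
    have "\<tau> (poly 1 x) = poly (map_poly \<sigma> 1) y" by (rule key[OF Epoly_1[OF sf]])
    thus "\<tau> 1 = 1" using s1 by simp
    fix a b assume "a \<in> adj E x" "b \<in> adj E x"
    then obtain p q where pq: "Epoly E p" "Epoly E q" "a = poly p x" "b = poly q x" unfolding adj_def by blast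
    have "\<tau> (a + b) = \<tau> (poly (p + q) x)" using pq by simp
    also have "\<dots> = poly (map_poly \<sigma> (p + q)) y" by (rule key[OF Epoly_add[OF sf pq(1,2)]])
    also have "\<dots> = \<tau> a + \<tau> b" using pq key map_hom_add[OF sf hom pq(1,2)] by simp
    finally show "\<tau> (a + b) = \<tau> a + \<tau> b" .
    have "\<tau> (a * b) = \<tau> (poly (p * q) x)" using pq by simp
    also have "\<dots> = poly (map_poly \<sigma> (p * q)) y" by (rule key[OF Epoly_mult[OF sf pq(1,2)]])
    also have "\<dots> = \<tau> a * \<tau> b" using pq key map_hom_mult[OF sf hom pq(1,2)] by simp
    finally show "\<tau> (a * b) = \<tau> a * \<tau> b" .
  qed
  moreover have "\<forall>z\<in>E. \<tau> z = \<sigma> z"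
  proof
    fix z assume z: "z \<in> E"
    have "\<tau> (poly [:z:] x) = poly (map_poly \<sigma> [:z:]) y" by (rule key[OF Epoly_const[OF sf z]])
    thus "\<tau> z = \<sigma> z" using map_poly_const_hom[of \<sigma> z, OF s0] by simp
  qed
  moreover have "\<tau> x = y"
  proof -
    have "\<tau> (poly [:0,1:] x) = poly (map_poly \<sigma> [:0,1:]) y" by (rule key[OF Epoly_X[OF sf]])
    moreover have "map_poly \<sigma> [:0,1:] = [:0,1:]" using s0 s1 by (simp add: map_poly_pCons)
    ultimately show ?thesis by simp
  qed
  ultimately show ?thesis by blast
qed

lemma alg_closed_root:
  assumes "alg_closed_type TYPE('a::field)" "degree (p::'a poly) > 0"
  shows "\<exists>y. poly p y = 0"
  using assms unfolding alg_closed_type_def by blast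

lemma extend1_any:
  fixes E :: "'a::field set"
  assumes ac: "alg_closed_type TYPE('a)" and sf: "subfield E" and al: "alg E x" and hom: "hom_on E \<sigma>"
  shows "\<exists>\<tau>. hom_on (adj E x) \<tau> \<and> (\<forall>z\<in>E. \<tau> z = \<sigma> z)"
proof -
  have "degree (map_poly \<sigma> (minpoly E x)) > 0"
    using degree_map_hom[OF sf hom mp_Epoly[OF sf al]] mp_deg_pos[OF sf al] by simp
  then obtain y where "poly (map_poly \<sigma> (minpoly E x)) y = 0" using alg_closed_root[OF ac] by blast
  thus ?thesis using extend1[OF sf al hom] by blast
qed

lemma gen_insert: "gen E (insert a S) = gen (gen E S) {a}"
proof (rule antisym)
  show "gen E (insert a S) \<subseteq> gen (gen E S) {a}"
  proof (rule gen_least[OF gen_subfield])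
    have "E \<subseteq> gen E S" "S \<subseteq> gen E S" "gen E S \<subseteq> gen (gen E S) {a}" "{a} \<subseteq> gen (gen E S) {a}"
      by (rule gen_base gen_gens)+
    thus "E \<subseteq> gen (gen E S) {a}" "insert a S \<subseteq> gen (gen E S) {a}" by blast+
  qed
  show "gen (gen E S) {a} \<subseteq> gen E (insert a S)"
  proof (rule gen_least[OF gen_subfield])
    show "gen E S \<subseteq> gen E (insert a S)" by (rule gen_mono) auto
    have "insert a S \<subseteq> gen E (insert a S)" by (rule gen_gens)
    thus "{a} \<subseteq> gen E (insert a S)" by blast
  qed
qed

lemma gen_empty: "subfield E \<Longrightarrow> gen E {} = E"
  using gen_base[of E "{}"] by (intro gen_eq_self) auto

lemma extendS:
  fixes E :: "'a::field set"
  assumes ac: "alg_closed_type TYPE('a)" and sf: "subfield E" and hom: "hom_on E \<sigma>"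
    and fin: "finite S" and al: "\<And>s. s \<in> S \<Longrightarrow> alg E s"
  shows "\<exists>\<tau>. hom_on (gen E S) \<tau> \<and> (\<forall>z\<in>E. \<tau> z = \<sigma> z)"
  using fin al
proof (induction S rule: finite_induct)
  case empty
  have "hom_on (gen E {}) \<sigma>" using hom gen_empty[OF sf] by simp
  thus ?case by blast
next
  case (insert a S)
  then obtain \<tau> where \<tau>: "hom_on (gen E S) \<tau>" "\<forall>z\<in>E. \<tau> z = \<sigma> z" by blast
  have "alg (gen E S) a" using insert.prems alg_mono gen_base by blast
  then obtain \<tau>' where \<tau>': "hom_on (adj (gen E S) a) \<tau>'" "\<forall>z\<in>gen E S. \<tau>' z = \<tau> z"
    using extend1_any[OF ac gen_subfield _ \<tau>(1)] by blast
  have "gen E (insert a S) = adj (gen E S) a"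
    using gen_insert[of E a S] gen_adj[OF gen_subfield \<open>alg (gen E S) a\<close>] by simp
  moreover have "\<forall>z\<in>E. \<tau>' z = \<sigma> z" using \<tau>'(2) \<tau>(2) gen_base[of E S] by (simp add: subset_iff)
  ultimately show ?case using \<tau>'(1) by metis
qed


locale ambient =
  fixes K :: "'a::field set"
  assumes clos: "is_alg_closure_of K" and perf: "perfect_subfield K"
begin

lemma sfK: "subfield K" using clos by (simp add: is_alg_closure_of_def)
lemma ac: "alg_closed_type TYPE('a)" using clos by (simp add: is_alg_closure_of_def)
lemma algK: "alg K x" using clos by (simp add: is_alg_closure_of_def algebraic_over_alg)
lemma algE: "K \<subseteq> E \<Longrightarrow> alg E x" using algK alg_mono by blast

lemma pderiv_mp_nz: "pderiv (minpoly K x) \<noteq> 0"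
proof
  define m where "m = minpoly K x"
  assume pd0: "pderiv (minpoly K x) = 0"
  hence pd: "pderiv m = 0" by (simp add: m_def)
  have mE: "Epoly K m" and mnz: "m \<noteq> 0" and mon: "lead_coeff m = 1" and mr: "poly m x = 0"
    and dpos: "degree m > 0"
    using mp_Epoly[OF sfK algK] mp_nz[OF sfK algK] mp_monic[OF sfK algK] mp_root[OF sfK algK]
      mp_deg_pos[OF sfK algK] by (auto simp: m_def)
  define D where "D = degree m"
  define p where "p = CHAR('a)"
  have cz: "of_nat (Suc j) * coeff m (Suc j) = 0" for j
    using arg_cong[OF pd, of "\<lambda>q. coeff q j"] by (simp add: coeff_pderiv)
  have "of_nat D * coeff m D = (0::'a)" using cz[of "D - 1"] dpos D_def by simp
  hence ofD: "of_nat D = (0::'a)" using mon D_def by simp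
  hence "p dvd D" unfolding p_def using of_nat_eq_0_iff_char_dvd by blast
  hence ppos: "p > 0" using dpos D_def by (cases "p = 0") auto
  have pprime: "prime p" unfolding p_def using ppos p_def prime_CHAR_semidom by blast
  have p2: "p \<ge> 2" using pprime prime_ge_2_nat by blast
  have pdvd: "p dvd i" if "coeff m i \<noteq> 0" for i
  proof (cases i)
    case 0 thus ?thesis by simp
  next
    case (Suc j)
    hence "of_nat (Suc j) = (0::'a)" using cz[of j] that by simp
    thus ?thesis using Suc unfolding p_def using of_nat_eq_0_iff_char_dvd by blast
  qed
  have perfK: "\<forall>k\<in>K. \<exists>y\<in>K. y ^ p = k" using perf ppos unfolding perfect_subfield_def p_def by auto
  define b where "b j = (SOME y. y \<in> K \<and> y ^ p = coeff m (p * j))" for j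
  have b: "b j \<in> K \<and> b j ^ p = coeff m (p * j)" for j
  proof -
    have "coeff m (p * j) \<in> K" using mE by (simp add: Epoly_def)
    then obtain y where "y \<in> K" "y ^ p = coeff m (p * j)" using perfK by blast
    thus ?thesis unfolding b_def by (rule someI[where P = "\<lambda>y. y \<in> K \<and> y ^ p = coeff m (p * j)", OF conjI])
  qed
  define J where "J = D div p"
  define h where "h = (\<Sum>j\<le>J. monom (b j) j)"
  have ch: "coeff h k = (if k \<le> J then b k else 0)" for k
    unfolding h_def by (simp add: coeff_sum coeff_monom)
  have hE: "Epoly K h" unfolding Epoly_def ch using b sf_0[OF sfK] by simp
  have DJ: "D = p * J" unfolding J_def using \<open>p dvd D\<close> by simp
  have hJ: "coeff h J \<noteq> 0"
  proof
    assume "coeff h J = 0"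
    hence "b J = 0" using ch by simp
    hence "coeff m (p * J) = 0" using b[of J] ppos by (simp add: power_0_left)
    thus False using DJ mon D_def by simp
  qed
  hence hnz: "h \<noteq> 0" by auto
  have degh: "degree h \<le> J" by (rule degree_le) (simp add: ch)
  have "J > 0" using DJ dpos D_def by (cases J) auto
  hence "1 * J < p * J" using p2 by (intro mult_strict_right_mono) auto
  hence JD: "J < D" using DJ by simp
  have "poly h x ^ p = (\<Sum>j\<le>J. b j * x ^ j) ^ p"
    unfolding h_def by (simp add: poly_sum poly_monom)
  also have "\<dots> = (\<Sum>j\<le>J. (b j * x ^ j) ^ p)"
    by (rule freshmans_dream_sum) (use pprime p_def in auto)
  also have "\<dots> = (\<Sum>j\<le>J. coeff m (p * j) * x ^ (p * j))"
    using b by (simp add: power_mult_distrib flip: power_mult) (simp add: mult.commute)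
  also have "\<dots> = (\<Sum>i\<in>(\<lambda>j. p * j) ` {..J}. coeff m i * x ^ i)"
    by (subst sum.reindex) (use ppos in \<open>auto simp: inj_on_def\<close>)
  also have "\<dots> = (\<Sum>i\<le>D. coeff m i * x ^ i)"
  proof (rule sum.mono_neutral_left)
    show "(\<lambda>j. p * j) ` {..J} \<subseteq> {..D}" using DJ by auto
    show "\<forall>i\<in>{..D} - (\<lambda>j. p * j) ` {..J}. coeff m i * x ^ i = 0"
    proof
      fix i assume i: "i \<in> {..D} - (\<lambda>j. p * j) ` {..J}"
      show "coeff m i * x ^ i = 0"
      proof (rule ccontr)
        assume "coeff m i * x ^ i \<noteq> 0"
        hence "p dvd i" using pdvd by auto
        then obtain j where "i = p * j" by blast
        moreover have "j \<le> J" using i \<open>i = p * j\<close> DJ ppos by auto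
        ultimately show False using i by auto
      qed
    qed
  qed auto
  also have "\<dots> = poly m x" by (simp add: D_def poly_altdef)
  finally have "poly h x = 0" using mr ppos by simp
  hence "D \<le> degree h" using mp_min[OF sfK algK hE hnz] by (simp add: D_def m_def)
  thus False using degh JD by simp
qed

lemma mp_K_sep: "poly (pderiv (minpoly K x)) x \<noteq> 0"
proof
  assume r: "poly (pderiv (minpoly K x)) x = 0"
  have "Epoly K (pderiv (minpoly K x))" by (rule Epoly_pderiv[OF sfK mp_Epoly[OF sfK algK]])
  hence "degree (minpoly K x) \<le> degree (pderiv (minpoly K x))"
    using mp_min[OF sfK algK] r pderiv_mp_nz by blast
  moreover have "degree (pderiv (minpoly K x)) \<le> degree (minpoly K x) - 1"
    by (rule degree_le) (simp add: coeff_pderiv coeff_eq_0)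
  ultimately show False using mp_deg_pos[OF sfK algK, of x] by simp
qed

lemma sep_root:
  assumes sf: "subfield E" and KE: "K \<subseteq> E" and xE: "x \<notin> E"
  shows "\<exists>y. y \<noteq> x \<and> poly (minpoly E x) y = 0"
proof -
  have al: "alg E x" using algE[OF KE] .
  define mE where "mE = minpoly E x"
  define mK where "mK = minpoly K x"
  have "Epoly E mK" using Epoly_mono[OF mp_Epoly[OF sfK algK] KE] by (simp add: mK_def)
  then obtain k where k: "mK = k * mE" using mp_dvd[OF sf al _ mp_root[OF sfK algK]] mK_def mE_def by blast
  have rE: "poly mE x = 0" using mp_root[OF sf al] mE_def by simp
  have "poly (pderiv mK) x = poly k x * poly (pderiv mE) x"
    using k rE by (simp add: pderiv_mult)
  hence sE: "poly (pderiv mE) x \<noteq> 0" using mp_K_sep mK_def by force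
  have d2: "degree mE \<ge> 2"
    using mp_deg_pos[OF sf al] mp_deg1[OF sf al] xE mE_def by (cases "degree mE"; cases "degree mE - 1") auto
  obtain q where q: "mE = [:-x, 1:] * q" using rE poly_eq_0_iff_dvd by blast
  have qnz: "q \<noteq> 0" using q mp_nz[OF sf al] mE_def by auto
  have "pderiv mE = [:-x,1:] * pderiv q + q * pderiv [:-x,1:]" by (simp only: q pderiv_mult)
  hence "poly (pderiv mE) x = poly q x" by (simp add: pderiv_pCons)
  hence qx: "poly q x \<noteq> 0" using sE by simp
  have "degree mE = degree [:-x, 1:] + degree q" unfolding q by (rule degree_mult_eq) (use qnz in auto)
  hence "degree mE = 1 + degree q" by simp
  hence "degree q > 0" using d2 by simp
  then obtain y where y: "poly q y = 0" using alg_closed_root[OF ac] by blast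
  have "y \<noteq> x" using y qx by auto
  moreover have "poly mE y = 0" using q y by simp
  ultimately show ?thesis unfolding mE_def by blast
qed

end


section \<open>Spans\<close>

definition subsp :: "'a::field set \<Rightarrow> 'a set \<Rightarrow> bool" where
  "subsp K W \<longleftrightarrow> 0 \<in> W \<and> (\<forall>x\<in>W. \<forall>y\<in>W. x + y \<in> W) \<and> (\<forall>k\<in>K. \<forall>x\<in>W. k * x \<in> W)"

lemma subsp_sum: "subsp K W \<Longrightarrow> (\<And>i. i \<in> I \<Longrightarrow> f i \<in> W) \<Longrightarrow> sum f I \<in> W"
  by (induction I rule: infinite_finite_induct) (auto simp: subsp_def)

lemma subfield_subsp: "subfield V \<Longrightarrow> K \<subseteq> V \<Longrightarrow> subsp K V"
  unfolding subsp_def using sf_0 sf_add sf_mult by blast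

lemma span_sum_restrict:
  fixes c :: "'a::field \<Rightarrow> 'a"
  assumes "finite T" "T1 \<subseteq> T"
  shows "(\<Sum>t\<in>T. (if t \<in> T1 then c t else 0) * t) = (\<Sum>t\<in>T1. c t * t)"
proof -
  have "(\<Sum>t\<in>T. (if t \<in> T1 then c t else 0) * t) = (\<Sum>t\<in>T. if t \<in> T1 then c t * t else 0)"
    by (rule sum.cong) auto
  also have "\<dots> = (\<Sum>t\<in>T \<inter> T1. c t * t)" using assms(1) by (rule sum.inter_restrict[symmetric])
  also have "T \<inter> T1 = T1" using assms(2) by blast
  finally show ?thesis .
qed

context
  fixes K :: "'a::field set"
  assumes sf: "subfield K"
begin

lemma span_subsp: "subsp K (span_over K S)"
  unfolding subsp_def
proof (intro conjI ballI)
  show "0 \<in> span_over K S" unfolding span_over_def by (intro CollectI exI[of _ "{}"]) auto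
  fix x y assume "x \<in> span_over K S" "y \<in> span_over K S"
  then obtain T1 c1 T2 c2 where t: "finite T1" "T1 \<subseteq> S" "\<forall>x\<in>T1. c1 x \<in> K" "x = (\<Sum>t\<in>T1. c1 t * t)"
    "finite T2" "T2 \<subseteq> S" "\<forall>x\<in>T2. c2 x \<in> K" "y = (\<Sum>t\<in>T2. c2 t * t)"
    unfolding span_over_def by blast
  define c where "c t = (if t \<in> T1 then c1 t else 0) + (if t \<in> T2 then c2 t else 0)" for t
  have "(\<Sum>t\<in>T1 \<union> T2. c t * t) = (\<Sum>t\<in>T1 \<union> T2. (if t \<in> T1 then c1 t else 0) * t) + (\<Sum>t\<in>T1 \<union> T2. (if t \<in> T2 then c2 t else 0) * t)"
    unfolding c_def by (simp add: distrib_right sum.distrib)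
  also have "\<dots> = x + y" using t by (simp add: span_sum_restrict)
  finally have "x + y = (\<Sum>t\<in>T1 \<union> T2. c t * t)" by simp
  moreover have "\<forall>t\<in>T1 \<union> T2. c t \<in> K" using t unfolding c_def by (auto intro: sf_add[OF sf] sf_0[OF sf])
  ultimately show "x + y \<in> span_over K S" unfolding span_over_def using t by blast
next
  fix k x assume k: "k \<in> K" and "x \<in> span_over K S"
  then obtain T c where t: "finite T" "T \<subseteq> S" "\<forall>x\<in>T. c x \<in> K" "x = (\<Sum>t\<in>T. c t * t)"
    unfolding span_over_def by blast
  have "k * x = (\<Sum>t\<in>T. (k * c t) * t)" using t by (simp add: sum_distrib_left mult.assoc)
  moreover have "\<forall>t\<in>T. k * c t \<in> K" using t k sf_mult[OF sf] by blast
  ultimately show "k * x \<in> span_over K S" unfolding span_over_def using t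
    by (intro CollectI exI[of _ T] exI[of _ "\<lambda>t. k * c t"]) auto
qed

lemma span_base: "s \<in> S \<Longrightarrow> s \<in> span_over K S"
  unfolding span_over_def using sf_1[OF sf]
  by (intro CollectI exI[of _ "{s}"] exI[of _ "\<lambda>_. 1"]) auto

lemma span_least: "subsp K W \<Longrightarrow> S \<subseteq> W \<Longrightarrow> span_over K S \<subseteq> W"
proof
  fix x assume W: "subsp K W" "S \<subseteq> W" and "x \<in> span_over K S"
  then obtain T c where t: "finite T" "T \<subseteq> S" "\<forall>x\<in>T. c x \<in> K" "x = (\<Sum>t\<in>T. c t * t)"
    unfolding span_over_def by blast
  show "x \<in> W" unfolding t(4) using W t by (intro subsp_sum) (auto simp: subsp_def)
qed

lemma span_mono: "S \<subseteq> S' \<Longrightarrow> span_over K S \<subseteq> span_over K S'"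
  using span_least[OF span_subsp] span_base by blast

lemma span_add: "x \<in> span_over K S \<Longrightarrow> y \<in> span_over K S \<Longrightarrow> x + y \<in> span_over K S"
  using span_subsp unfolding subsp_def by blast
lemma span_smult: "k \<in> K \<Longrightarrow> x \<in> span_over K S \<Longrightarrow> k * x \<in> span_over K S"
  using span_subsp unfolding subsp_def by blast
lemma span_0: "0 \<in> span_over K S"
  using span_subsp unfolding subsp_def by blast
lemma span_sum: "(\<And>i. i \<in> I \<Longrightarrow> f i \<in> span_over K S) \<Longrightarrow> sum f I \<in> span_over K S"
  by (rule subsp_sum[OF span_subsp])

lemma extract_basis:
  "finite S \<Longrightarrow> \<exists>B\<subseteq>S. lin_indep_over K B \<and> span_over K B = span_over K S"
proof (induction "card S" arbitrary: S rule: less_induct)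
  case less
  show ?case
  proof (cases "lin_indep_over K S")
    case True thus ?thesis by blast
  next
    case False
    then obtain T c t0 where tc: "finite T" "T \<subseteq> S" "\<forall>x\<in>T. c x \<in> K" "(\<Sum>x\<in>T. c x * x) = 0"
      and t0: "t0 \<in> T" "c t0 \<noteq> 0"
      unfolding lin_indep_over_def by blast
    have "(\<Sum>x\<in>T. c x * x) = c t0 * t0 + (\<Sum>x\<in>T - {t0}. c x * x)"
      using tc(1) t0(1) by (rule sum.remove)
    hence h: "c t0 * t0 = - (\<Sum>x\<in>T - {t0}. c x * x)"
      using tc(4) by (simp add: eq_neg_iff_add_eq_0)
    have "t0 = inverse (c t0) * (c t0 * t0)" using t0(2) by simp
    hence eq: "t0 = - inverse (c t0) * (\<Sum>x\<in>T - {t0}. c x * x)" unfolding h by simp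
    have "(\<Sum>x\<in>T - {t0}. c x * x) \<in> span_over K (S - {t0})"
      using tc by (intro span_sum span_smult span_base) auto
    moreover have "- inverse (c t0) \<in> K" using sf_uminus[OF sf] sf_inverse[OF sf] tc(3) t0(1) by blast
    ultimately have sp1: "- inverse (c t0) * (\<Sum>x\<in>T - {t0}. c x * x) \<in> span_over K (S - {t0})"
      by (intro span_smult)
    have iff1: "t0 \<in> span_over K (S - {t0}) \<longleftrightarrow> - inverse (c t0) * (\<Sum>x\<in>T - {t0}. c x * x) \<in> span_over K (S - {t0})"
      using eq by (rule arg_cong[where f="\<lambda>z. z \<in> span_over K (S - {t0})"])
    have t0sp: "t0 \<in> span_over K (S - {t0})" using iff1 sp1 by (rule iffD2)
    have "span_over K S \<subseteq> span_over K (S - {t0})"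
    proof (rule span_least[OF span_subsp])
      show "S \<subseteq> span_over K (S - {t0})"
      proof
        fix s assume s: "s \<in> S"
        show "s \<in> span_over K (S - {t0})"
        proof (cases "s = t0")
          case True thus ?thesis using t0sp by simp
        next
          case False thus ?thesis using s by (intro span_base) auto
        qed
      qed
    qed
    moreover have "span_over K (S - {t0}) \<subseteq> span_over K S" by (rule span_mono) auto
    ultimately have speq: "span_over K (S - {t0}) = span_over K S" by blast
    have "card (S - {t0}) < card S" using less.prems tc(2) t0(1) by (intro card_Diff1_less) auto
    then obtain B where "B \<subseteq> S - {t0}" "lin_indep_over K B" "span_over K B = span_over K (S - {t0})"
      using less.hyps less.prems by blast
    thus ?thesis using speq by blast
  qed
qed

lemma fin_span_fin_ext:
  assumes "subfield V" "K \<subseteq> V" "finite S" "S \<subseteq> V" "span_over K S = V"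
  shows "finite_ext K V"
proof -
  obtain B where "B \<subseteq> S" "lin_indep_over K B" "span_over K B = span_over K S"
    using extract_basis[OF assms(3)] by blast
  hence "finite B" "is_basis_over K V B" using assms(3,4,5) finite_subset[of B S]
    unfolding is_basis_over_def by auto
  thus ?thesis unfolding finite_ext_def using assms(1,2) sf by blast
qed

lemma span_one: "span_over K {1} = K"
proof
  have ss: "subsp K K" by (rule subfield_subsp[OF sf]) simp
  show "span_over K {1} \<subseteq> K" by (rule span_least[OF ss]) (simp add: sf_1[OF sf])
  show "K \<subseteq> span_over K {1}"
  proof
    fix k assume "k \<in> K"
    have "(1::'a) \<in> span_over K {1}" by (rule span_base) simp
    hence "k * 1 \<in> span_over K {1}" by (rule span_smult[OF \<open>k \<in> K\<close>])
    thus "k \<in> span_over K {1}" by simp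
  qed
qed

end

lemma span_mono_field: "K \<subseteq> K' \<Longrightarrow> span_over K S \<subseteq> span_over K' S"
  unfolding span_over_def by (auto 0 4)

context ambient
begin

lemma gen_fin_span: "finite S \<Longrightarrow> \<exists>S'. finite S' \<and> S' \<subseteq> gen K S \<and> span_over K S' = gen K S"
proof (induction S rule: finite_induct)
  case empty
  thus ?case using span_one[OF sfK] gen_empty[OF sfK] sf_1[OF sfK] by (intro exI[of _ "{1}"]) auto
next
  case (insert a S)
  define E where "E = gen K S"
  obtain SE where SE: "finite SE" "SE \<subseteq> E" "span_over K SE = E" using insert.IH E_def by blast
  have KE: "K \<subseteq> E" unfolding E_def by (rule gen_base)
  have sfE: "subfield E" unfolding E_def by (rule gen_subfield)
  have alE: "alg E a" using algE[OF KE] .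
  have geq: "gen K (insert a S) = adj E a"
    using gen_insert[of K a S] gen_adj[OF sfE alE] E_def by simp
  define m where "m = minpoly K a"
  define d where "d = degree m"
  have mE: "Epoly E m" using Epoly_mono[OF mp_Epoly[OF sfK algK] KE] m_def by simp
  have mnz: "m \<noteq> 0" using mp_nz[OF sfK algK] m_def by simp
  have mr: "poly m a = 0" using mp_root[OF sfK algK] m_def by simp
  have dpos: "d > 0" using mp_deg_pos[OF sfK algK] m_def d_def by simp
  define S'' where "S'' = (\<lambda>(s, i). s * a ^ i) ` (SE \<times> {..<d})"
  have fin: "finite S''" unfolding S''_def using SE(1) by simp
  have sfA: "subfield (adj E a)" by (rule adj_subfield[OF sfE alE])
  have EA: "E \<subseteq> adj E a" by (rule adj_base[OF sfE alE])
  have aA: "a \<in> adj E a" by (rule adj_gen[OF sfE alE])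
  have sub: "S'' \<subseteq> adj E a"
    unfolding S''_def using SE(2) EA aA sf_mult[OF sfA] sf_power[OF sfA] by auto
  have "span_over K S'' = adj E a"
  proof
    show "span_over K S'' \<subseteq> adj E a"
      by (rule span_least[OF sfK subfield_subsp[OF sfA]]) (use KE EA sub in auto)
    show "adj E a \<subseteq> span_over K S''"
    proof
      fix z assume "z \<in> adj E a"
      then obtain p where p: "Epoly E p" "z = poly p a" unfolding adj_def by blast
      obtain q r where qr: "Epoly E q" "Epoly E r" "p = q * m + r" "r = 0 \<or> degree r < degree m"
        using Epoly_divmod[OF sfE mE mnz p(1)] by blast
      have "z = poly r a" using p(2) qr(3) mr by simp
      also have "\<dots> = (\<Sum>i\<le>d - 1. coeff r i * a ^ i)"
        by (rule poly_sum_le) (use qr(4) d_def in auto)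
      finally have zs: "z = (\<Sum>i\<le>d - 1. coeff r i * a ^ i)" .
      have trm: "u * a ^ i \<in> span_over K S''" if u: "u \<in> E" and i: "i < d" for u i
      proof -
        define W where "W = {u. u * a ^ i \<in> span_over K S''}"
        have "subsp K W" unfolding W_def subsp_def
          using span_add[OF sfK] span_smult[OF sfK] span_0[OF sfK]
          by (auto simp: distrib_right mult.assoc)
        moreover have "SE \<subseteq> W" unfolding W_def S''_def using i by (auto intro!: span_base[OF sfK])
        ultimately have "span_over K SE \<subseteq> W" by (rule span_least[OF sfK])
        thus ?thesis using u SE(3) W_def by blast
      qed
      show "z \<in> span_over K S''" unfolding zs
        using qr(2) dpos by (intro span_sum[OF sfK] trm) (auto simp: Epoly_def)
    qed
  qed
  thus ?case using fin sub geq by auto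
qed

lemma gen_fin_ext: "finite S \<Longrightarrow> finite_ext K (gen K S)"
  using gen_fin_span fin_span_fin_ext[OF sfK gen_subfield gen_base] by blast

lemma fin_ext_basis:
  assumes "finite_ext K L"
  shows "\<exists>B. finite B \<and> B \<subseteq> L \<and> lin_indep_over K B \<and> span_over K B = L \<and> gen K B = L"
proof -
  obtain B where B: "finite B" "is_basis_over K L B" using assms unfolding finite_ext_def by blast
  have sfL: "subfield L" and KL: "K \<subseteq> L" using assms unfolding finite_ext_def by auto
  have "gen K B = L"
  proof (rule gen_eq_self[OF sfL KL])
    show "B \<subseteq> L" using B unfolding is_basis_over_def by blast
    have "span_over K B \<subseteq> gen K B"
      by (rule span_least[OF sfK subfield_subsp[OF gen_subfield gen_base]]) (rule gen_gens)
    thus "L \<subseteq> gen K B" using B unfolding is_basis_over_def by blast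
  qed
  thus ?thesis using B unfolding is_basis_over_def by blast
qed

lemma degree_gt2_not_sub:
  assumes fe: "finite_ext K L" and d: "ext_degree K L > 2"
  shows "\<exists>l\<in>L. l \<notin> K"
proof (rule ccontr)
  assume "\<not> ?thesis"
  hence LK: "L \<subseteq> K" by blast
  define B where "B = (SOME B. finite B \<and> is_basis_over K L B)"
  have "\<exists>B. finite B \<and> is_basis_over K L B" using fe unfolding finite_ext_def by blast
  hence B: "finite B" "is_basis_over K L B" unfolding B_def by (metis (no_types, lifting) someI_ex)+
  have cB: "ext_degree K L = card B" using fe unfolding ext_degree_def B_def by simp
  have BK: "B \<subseteq> K" and li: "lin_indep_over K B" using B(2) LK unfolding is_basis_over_def by auto
  have nz: "b \<noteq> 0" if "b \<in> B" for b
  proof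
    assume "b = 0"
    hence s0: "(\<Sum>x\<in>{b}. (\<lambda>_. 1) x * x) = 0" by simp
    have "(\<lambda>_. (1::'a)) b = 0"
      by (rule li[unfolded lin_indep_over_def, rule_format, of "{b}" "\<lambda>_. 1"]) (use that s0 sf_1[OF sfK] in auto)
    thus False by simp
  qed
  have "\<forall>a1\<in>B. \<forall>a2\<in>B. a1 = a2"
  proof (intro ballI, rule ccontr)
    fix a b assume ab: "a \<in> B" "b \<in> B" "a \<noteq> b"
    define c where "c x = (if x = a then b else - a)" for x
    have s0: "(\<Sum>x\<in>{a, b}. c x * x) = 0" using ab(3) by (simp add: c_def)
    have cK: "\<forall>x\<in>{a,b}. c x \<in> K" using ab BK sf_uminus[OF sfK] unfolding c_def by auto
    have "c a = 0"
      by (rule li[unfolded lin_indep_over_def, rule_format, of "{a,b}" c]) (use ab s0 cK in auto)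
    thus False using nz[OF ab(2)] by (simp add: c_def)
  qed
  hence "card B \<le> Suc 0" using card_le_Suc0_iff_eq[OF B(1)] by blast
  thus False using d cB by simp
qed

end


lemma iso_hom: "K_iso K \<sigma> E E' \<Longrightarrow> hom_on E \<sigma>"
  unfolding K_iso_def hom_on_def by blast
lemma iso_fix: "K_iso K \<sigma> E E' \<Longrightarrow> x \<in> K \<Longrightarrow> \<sigma> x = x"
  unfolding K_iso_def by blast
lemma iso_bij: "K_iso K \<sigma> E E' \<Longrightarrow> bij_betw \<sigma> E E'"
  unfolding K_iso_def by blast
lemma iso_image: "K_iso K \<sigma> E E' \<Longrightarrow> \<sigma> ` E = E'"
  unfolding K_iso_def bij_betw_def by blast
lemma K_isoI: "bij_betw \<sigma> E E' \<Longrightarrow> hom_on E \<sigma> \<Longrightarrow> (\<And>x. x \<in> K \<Longrightarrow> \<sigma> x = x) \<Longrightarrow> K_iso K \<sigma> E E'"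
  unfolding K_iso_def hom_on_def by blast

lemma iso_id: "K_iso K id G G"
  unfolding K_iso_def by simp

lemma iso_comp:
  assumes s: "K_iso K \<sigma> G G" and t: "K_iso K \<tau> G G"
  shows "K_iso K (\<sigma> \<circ> \<tau>) G G"
proof (rule K_isoI)
  show "bij_betw (\<sigma> \<circ> \<tau>) G G" using iso_bij[OF s] iso_bij[OF t] by (rule bij_betw_trans[rotated])
  have tG: "\<tau> x \<in> G" if "x \<in> G" for x using iso_image[OF t] that by blast
  show "hom_on G (\<sigma> \<circ> \<tau>)" unfolding hom_on_def
    using iso_hom[OF s] iso_hom[OF t] tG by (simp add: hom_on_def)
  show "x \<in> K \<Longrightarrow> (\<sigma> \<circ> \<tau>) x = x" for x using iso_fix[OF s] iso_fix[OF t] by simp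
qed

lemma preimage_subfield:
  assumes sfD: "subfield D" and hom: "hom_on D \<sigma>" and sfM: "subfield M" and MD: "M \<subseteq> D" and sfW: "subfield W"
  shows "subfield {z\<in>M. \<sigma> z \<in> W}"
  unfolding subfield_def
proof (intro conjI ballI impI)
  show "0 \<in> {z \<in> M. \<sigma> z \<in> W}" using sf_0[OF sfM] sf_0[OF sfW] hom_0[OF sfD hom] by simp
  show "1 \<in> {z \<in> M. \<sigma> z \<in> W}" using sf_1[OF sfM] sf_1[OF sfW] hom_1[OF hom] by simp
  fix x y assume x: "x \<in> {z \<in> M. \<sigma> z \<in> W}" and y: "y \<in> {z \<in> M. \<sigma> z \<in> W}"
  hence xD: "x \<in> D" "y \<in> D" using MD by auto
  show "x + y \<in> {z \<in> M. \<sigma> z \<in> W}" using x y hom_add[OF hom xD] sf_add[OF sfM] sf_add[OF sfW] by simp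
  show "x * y \<in> {z \<in> M. \<sigma> z \<in> W}" using x y hom_mult[OF hom xD] sf_mult[OF sfM] sf_mult[OF sfW] by simp
next
  fix x assume x: "x \<in> {z \<in> M. \<sigma> z \<in> W}"
  hence xD: "x \<in> D" using MD by auto
  show "- x \<in> {z \<in> M. \<sigma> z \<in> W}" using x hom_uminus[OF sfD hom xD] sf_uminus[OF sfM] sf_uminus[OF sfW] by simp
  show "inverse x \<in> {z \<in> M. \<sigma> z \<in> W}" using x hom_inverse[OF sfD hom xD] sf_inverse[OF sfM] sf_inverse[OF sfW] by simp
qed

context ambient
begin

definition conjs :: "'a \<Rightarrow> 'a set" where
  "conjs x = {y. poly (minpoly K x) y = 0}"

definition Rt :: "'a set \<Rightarrow> 'a set" where
  "Rt A = \<Union> (conjs ` A)"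

lemma conjs_finite: "finite (conjs x)"
  unfolding conjs_def by (rule poly_roots_finite[OF mp_nz[OF sfK algK]])

lemma conjs_self: "x \<in> conjs x"
  unfolding conjs_def using mp_root[OF sfK algK] by simp

lemma conjs_trans: "y \<in> conjs x \<Longrightarrow> conjs y \<subseteq> conjs x"
proof
  fix z assume y: "y \<in> conjs x" and z: "z \<in> conjs y"
  obtain k where "minpoly K x = k * minpoly K y"
    using mp_dvd[OF sfK algK mp_Epoly[OF sfK algK]] y unfolding conjs_def by blast
  thus "z \<in> conjs x" using z unfolding conjs_def by simp
qed

lemma Rt_finite: "finite A \<Longrightarrow> finite (Rt A)"
  unfolding Rt_def using conjs_finite by blast

lemma Rt_base: "A \<subseteq> Rt A"
  unfolding Rt_def using conjs_self by blast

lemma Rt_Un: "Rt (A \<union> B) = Rt A \<union> Rt B"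
  unfolding Rt_def by blast

lemma hom_conj:
  assumes sfD: "subfield D" and hom: "hom_on D \<sigma>" and KD: "K \<subseteq> D" and fx: "\<And>k. k \<in> K \<Longrightarrow> \<sigma> k = k"
    and x: "x \<in> D"
  shows "\<sigma> x \<in> conjs x"
proof -
  define m where "m = minpoly K x"
  have mK: "Epoly K m" using mp_Epoly[OF sfK algK] m_def by simp
  hence mD: "Epoly D m" using Epoly_mono KD by blast
  have "map_poly \<sigma> m = m" by (rule map_poly_fix) (use mK fx in \<open>auto simp: Epoly_def\<close>)
  hence "poly m (\<sigma> x) = \<sigma> (poly m x)" using poly_map_hom[OF sfD hom mD x] by simp
  also have "\<dots> = 0" using mp_root[OF sfK algK] hom_0[OF sfD hom] m_def by simp
  finally show ?thesis unfolding conjs_def m_def by simp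
qed

lemma hom_Rt:
  assumes sfD: "subfield D" and hom: "hom_on D \<sigma>" and KD: "K \<subseteq> D" and fx: "\<And>k. k \<in> K \<Longrightarrow> \<sigma> k = k"
    and RD: "Rt A \<subseteq> D"
  shows "\<sigma> ` Rt A \<subseteq> Rt A"
proof
  fix z assume "z \<in> \<sigma> ` Rt A"
  then obtain r a where r: "a \<in> A" "r \<in> conjs a" "z = \<sigma> r" unfolding Rt_def by blast
  have "r \<in> D" using RD r unfolding Rt_def by blast
  hence "z \<in> conjs r" using hom_conj[OF sfD hom KD fx] r by blast
  hence "z \<in> conjs a" using conjs_trans[OF r(2)] by blast
  thus "z \<in> Rt A" using r unfolding Rt_def by blast
qed

lemma normal_image:
  assumes sfD: "subfield D" and hom: "hom_on D \<sigma>" and fx: "\<And>k. k \<in> K \<Longrightarrow> \<sigma> k = k"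
    and fin: "finite R" and ND: "gen K R \<subseteq> D" and RR: "\<sigma> ` R \<subseteq> R"
  shows "\<sigma> ` gen K R = gen K R"
proof
  define N where "N = gen K R"
  have sfN: "subfield N" unfolding N_def by (rule gen_subfield)
  have KN: "K \<subseteq> N" and RN: "R \<subseteq> N" unfolding N_def by (rule gen_base, rule gen_gens)
  have "inj_on \<sigma> R" using hom_inj[OF sfD hom] ND RN N_def inj_on_subset by blast
  hence Req: "\<sigma> ` R = R" using endo_inj_surj[OF fin RR] by blast
  have "N \<subseteq> {z\<in>N. \<sigma> z \<in> N}"
    unfolding N_def
  proof (rule gen_least)
    show "subfield {z \<in> gen K R. \<sigma> z \<in> gen K R}"
      by (rule preimage_subfield[OF sfD hom gen_subfield ND gen_subfield])
    show "K \<subseteq> {z \<in> gen K R. \<sigma> z \<in> gen K R}" using KN fx N_def by auto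
    show "R \<subseteq> {z \<in> gen K R. \<sigma> z \<in> gen K R}" using RN RR N_def by auto
  qed
  thus "\<sigma> ` gen K R \<subseteq> gen K R" using N_def by auto
  have homN: "hom_on N \<sigma>" using hom_mono[OF hom] ND N_def by blast
  have "N \<subseteq> \<sigma> ` N"
    unfolding N_def
  proof (rule gen_least)
    show "subfield (\<sigma> ` gen K R)" using hom_image_subfield[OF sfN homN] N_def by simp
    show "K \<subseteq> \<sigma> ` gen K R"
    proof
      fix k assume "k \<in> K" thus "k \<in> \<sigma> ` gen K R" using fx[of k] KN N_def by (metis image_eqI subsetD)
    qed
    show "R \<subseteq> \<sigma> ` gen K R" using Req RN N_def by blast
  qed
  thus "gen K R \<subseteq> \<sigma> ` gen K R" using N_def by simp
qed

lemma map_poly_lin: "hom_on G \<sigma> \<Longrightarrow> subfield G \<Longrightarrow> w \<in> G \<Longrightarrow> map_poly \<sigma> [:-w, 1:] = [:- \<sigma> w, 1:]"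
  by (rule poly_eqI) (auto simp: coeff_map_hom coeff_pCons hom_uminus hom_1 hom_0 split: nat.split)

lemma galois_conj:
  assumes gal: "galois_ext K G" and g: "g \<in> G"
  shows "conjs g \<subseteq> G"
proof -
  have fe: "finite_ext K G" using gal unfolding galois_ext_def by blast
  have sfG: "subfield G" and KG: "K \<subseteq> G" using fe unfolding finite_ext_def by auto
  have fixK: "{x\<in>G. \<forall>\<sigma>. K_iso K \<sigma> G G \<longrightarrow> \<sigma> x = x} = K" using gal unfolding galois_ext_def by blast
  define Aut where "Aut = {\<sigma>. K_iso K \<sigma> G G}"
  define Orb where "Orb = (\<lambda>\<sigma>. \<sigma> g) ` Aut"
  have OrbC: "Orb \<subseteq> conjs g"
    unfolding Orb_def Aut_def using hom_conj[OF sfG _ KG _ g] iso_hom iso_fix by blast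
  have finO: "finite Orb" using finite_subset[OF OrbC conjs_finite] .
  have OrbG: "Orb \<subseteq> G" unfolding Orb_def Aut_def using iso_image g by blast
  have gOrb: "g \<in> Orb" unfolding Orb_def Aut_def using iso_id[of K G] by (intro image_eqI[of _ _ id]) auto
  define P where "P = (\<Prod>w\<in>Orb. [:-w, 1:])"
  have PG: "Epoly G P" unfolding P_def using OrbG
    by (intro Epoly_prod[OF sfG] Epoly_pCons[OF sfG] Epoly_const[OF sfG] sf_uminus[OF sfG] sf_1[OF sfG]) auto
  have fixP: "\<sigma> (coeff P i) = coeff P i" if s: "\<sigma> \<in> Aut" for \<sigma> i
  proof -
    have iso: "K_iso K \<sigma> G G" using s Aut_def by simp
    have hom: "hom_on G \<sigma>" by (rule iso_hom[OF iso])
    have "\<sigma> ` Orb \<subseteq> Orb"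
    proof
      fix z assume "z \<in> \<sigma> ` Orb"
      then obtain \<tau> where t: "\<tau> \<in> Aut" "z = \<sigma> (\<tau> g)" unfolding Orb_def by blast
      have "\<sigma> \<circ> \<tau> \<in> Aut" using iso_comp[OF iso] t(1) Aut_def by simp
      thus "z \<in> Orb" unfolding Orb_def using t(2) by (intro image_eqI[of _ _ "\<sigma> \<circ> \<tau>"]) auto
    qed
    moreover have "inj_on \<sigma> Orb" using hom_inj[OF sfG hom] OrbG inj_on_subset by blast
    ultimately have Oeq: "\<sigma> ` Orb = Orb" using endo_inj_surj[OF finO] by blast
    have "map_poly \<sigma> P = (\<Prod>w\<in>Orb. map_poly \<sigma> [:-w, 1:])" unfolding P_def
      by (rule map_hom_prod[OF sfG hom]) (use OrbG in \<open>auto intro!: Epoly_pCons[OF sfG] Epoly_const[OF sfG] sf_uminus[OF sfG] sf_1[OF sfG]\<close>)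
    also have "\<dots> = (\<Prod>w\<in>Orb. [:- \<sigma> w, 1:])" using OrbG map_poly_lin[OF hom sfG] by (intro prod.cong) auto
    also have "\<dots> = (\<Prod>w\<in>\<sigma> ` Orb. [:- w, 1:])"
      using prod.reindex[OF \<open>inj_on \<sigma> Orb\<close>, of "\<lambda>w. [:- w, 1:]"] by simp
    also have "\<dots> = P" unfolding P_def Oeq ..
    finally have "map_poly \<sigma> P = P" .
    hence "coeff (map_poly \<sigma> P) i = coeff P i" by simp
    thus ?thesis by (simp add: coeff_map_hom[OF sfG hom])
  qed
  have PK: "Epoly K P" unfolding Epoly_def
  proof
    fix i
    have "coeff P i \<in> {x\<in>G. \<forall>\<sigma>. K_iso K \<sigma> G G \<longrightarrow> \<sigma> x = x}"
      using PG fixP unfolding Epoly_def Aut_def by blast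
    thus "coeff P i \<in> K" using fixK by simp
  qed
  have Pg: "poly P g = 0" unfolding P_def poly_prod using gOrb finO by (simp add: prod_zero_iff) 
  obtain k where k: "P = k * minpoly K g" using mp_dvd[OF sfK algK PK Pg] by blast
  show ?thesis
  proof
    fix y assume "y \<in> conjs g"
    hence "poly P y = 0" using k unfolding conjs_def by simp
    hence "y \<in> Orb" unfolding P_def poly_prod using finO by (simp add: prod_zero_iff)
    thus "y \<in> G" using OrbG by blast
  qed
qed

lemma NC_galois:
  assumes finA: "finite A"
  shows "galois_ext K (gen K (Rt A))"
proof -
  define N where "N = gen K (Rt A)"
  have finR: "finite (Rt A)" by (rule Rt_finite[OF finA])
  have fe: "finite_ext K N" unfolding N_def by (rule gen_fin_ext[OF finR])
  have KN: "K \<subseteq> N" unfolding N_def by (rule gen_base)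
  have "{x\<in>N. \<forall>\<sigma>. K_iso K \<sigma> N N \<longrightarrow> \<sigma> x = x} = K"
  proof
    show "K \<subseteq> {x\<in>N. \<forall>\<sigma>. K_iso K \<sigma> N N \<longrightarrow> \<sigma> x = x}" using KN iso_fix by blast
    show "{x\<in>N. \<forall>\<sigma>. K_iso K \<sigma> N N \<longrightarrow> \<sigma> x = x} \<subseteq> K"
    proof
      fix x assume x: "x \<in> {x\<in>N. \<forall>\<sigma>. K_iso K \<sigma> N N \<longrightarrow> \<sigma> x = x}"
      show "x \<in> K"
      proof (rule ccontr)
        assume xK: "x \<notin> K"
        obtain y where y: "y \<noteq> x" "poly (minpoly K x) y = 0" using sep_root[OF sfK subset_refl xK] by blast
        have homid: "hom_on K (\<lambda>z. z)" by (simp add: hom_on_def)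
        obtain \<tau> where \<tau>: "hom_on (adj K x) \<tau>" "\<forall>z\<in>K. \<tau> z = z" "\<tau> x = y"
          using extend1[OF sfK algK homid] y(2) by auto
        define E where "E = adj K x"
        have sfE: "subfield E" unfolding E_def by (rule adj_subfield[OF sfK algK])
        have KE: "K \<subseteq> E" unfolding E_def by (rule adj_base[OF sfK algK])
        have xE: "x \<in> E" unfolding E_def by (rule adj_gen[OF sfK algK])
        obtain \<tau>' where \<tau>': "hom_on (gen E (Rt A)) \<tau>'" "\<forall>z\<in>E. \<tau>' z = \<tau> z"
          using extendS[OF ac sfE \<tau>(1)[folded E_def] finR] algE[OF KE] by blast
        define D where "D = gen E (Rt A)"
        have sfD: "subfield D" unfolding D_def by (rule gen_subfield)
        have ED: "E \<subseteq> D" unfolding D_def by (rule gen_base)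
        have ND: "N \<subseteq> D" unfolding N_def D_def by (rule gen_mono[OF KE subset_refl])
        have fx': "\<tau>' k = k" if "k \<in> K" for k using \<tau>'(2) \<tau>(2) KE that by auto
        have RN: "Rt A \<subseteq> N" unfolding N_def by (rule gen_gens)
        have RR: "\<tau>' ` Rt A \<subseteq> Rt A"
          by (rule hom_Rt[OF sfD \<tau>'(1)[folded D_def]]) (use KE ED fx' RN ND in auto)
        have img: "\<tau>' ` N = N" unfolding N_def
          by (rule normal_image[OF sfD \<tau>'(1)[folded D_def] fx' finR]) (use ND N_def RR in auto)
        have "K_iso K \<tau>' N N"
        proof (rule K_isoI)
          have "inj_on \<tau>' N" using hom_inj[OF sfD \<tau>'(1)[folded D_def]] ND inj_on_subset by blast
          thus "bij_betw \<tau>' N N" using img by (simp add: bij_betw_def)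
          show "hom_on N \<tau>'" using hom_mono[OF \<tau>'(1)[folded D_def] ND] .
        qed (rule fx')
        hence "\<tau>' x = x" using x by blast
        moreover have "\<tau>' x = y" using \<tau>'(2) \<tau>(3) xE by simp
        ultimately show False using y(1) by simp
      qed
    qed
  qed
  thus ?thesis using fe unfolding galois_ext_def N_def by blast
qed

lemma NC_least: "galois_ext K G \<Longrightarrow> A \<subseteq> G \<Longrightarrow> gen K (Rt A) \<subseteq> G"
proof -
  assume gal: "galois_ext K G" and AG: "A \<subseteq> G"
  have sfG: "subfield G" and KG: "K \<subseteq> G" using gal unfolding galois_ext_def finite_ext_def by auto
  have "Rt A \<subseteq> G" unfolding Rt_def using galois_conj[OF gal] AG by blast
  thus ?thesis using gen_least[OF sfG KG] by blast
qed

lemma galois_closure_eq: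
  assumes finA: "finite A" and AL: "A \<subseteq> L" and LA: "L \<subseteq> gen K A"
  shows "galois_closure K L = gen K (Rt A)"
proof -
  define N where "N = gen K (Rt A)"
  have gal: "galois_ext K N" unfolding N_def by (rule NC_galois[OF finA])
  have "gen K A \<subseteq> N" unfolding N_def by (rule gen_mono[OF subset_refl Rt_base])
  hence LN: "L \<subseteq> N" using LA by blast
  have "galois_closure K L \<subseteq> N" unfolding galois_closure_def
    using gal LN gen_subfield N_def by blast
  moreover have "N \<subseteq> galois_closure K L" unfolding galois_closure_def N_def
    using NC_least AL by blast
  ultimately show ?thesis unfolding N_def by blast
qed

lemma galois_gen:
  assumes gal: "galois_ext K F"
  shows "\<exists>B. finite B \<and> B \<subseteq> F \<and> lin_indep_over K B \<and> span_over K B = F \<and> gen K B = F \<and> F = gen K (Rt B)"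
proof -
  obtain B where B: "finite B" "B \<subseteq> F" "lin_indep_over K B" "span_over K B = F" "gen K B = F"
  proof -
    have "finite_ext K F" using gal by (simp add: galois_ext_def)
    from fin_ext_basis[OF this] show ?thesis using that by blast
  qed
  have "gen K (Rt B) \<subseteq> F" using NC_least[OF gal B(2)] .
  moreover have "F \<subseteq> gen K (Rt B)" using gen_mono[OF subset_refl Rt_base, of K B] B(5) by simp
  ultimately have "F = gen K (Rt B)" by (rule antisym[rotated])
  thus ?thesis using B by (intro exI[of _ B]) simp
qed

end


lemma lin_indep_subset: "lin_indep_over K B \<Longrightarrow> T \<subseteq> B \<Longrightarrow> lin_indep_over K T"
  unfolding lin_indep_over_def by blast

lemma gen_union_gen: "gen K (gen K X \<union> Y) = gen K (X \<union> Y)"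
proof (rule antisym)
  show "gen K (gen K X \<union> Y) \<subseteq> gen K (X \<union> Y)"
  proof (rule gen_least[OF gen_subfield gen_base])
    have "gen K X \<subseteq> gen K (X \<union> Y)" by (rule gen_mono) auto
    moreover have "Y \<subseteq> gen K (X \<union> Y)" using gen_gens[of "X \<union> Y" K] by blast
    ultimately show "gen K X \<union> Y \<subseteq> gen K (X \<union> Y)" by blast
  qed
  show "gen K (X \<union> Y) \<subseteq> gen K (gen K X \<union> Y)" by (rule gen_mono) (use gen_gens in auto)
qed

context ambient
begin

lemma moving:
  assumes finA: "finite A" and sfF: "subfield F" and KF: "K \<subseteq> F"
    and zN: "z \<in> gen K (Rt A)" and zF: "z \<notin> F"
  shows "\<exists>\<sigma> D. subfield D \<and> hom_on D \<sigma> \<and> F \<subseteq> D \<and> gen K (Rt A) \<subseteq> D \<and> (\<forall>f\<in>F. \<sigma> f = f)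
      \<and> \<sigma> ` gen K (Rt A) \<subseteq> gen K (Rt A) \<and> \<sigma> z \<noteq> z"
proof -
  define N where "N = gen K (Rt A)"
  have finR: "finite (Rt A)" by (rule Rt_finite[OF finA])
  have alF: "alg F z" by (rule algE[OF KF])
  obtain y where y: "y \<noteq> z" "poly (minpoly F z) y = 0" using sep_root[OF sfF KF zF] by blast
  have homid: "hom_on F (\<lambda>u. u)" by (simp add: hom_on_def)
  obtain \<tau> where \<tau>: "hom_on (adj F z) \<tau>" "\<forall>u\<in>F. \<tau> u = u" "\<tau> z = y"
    using extend1[OF sfF alF homid] y(2) by auto
  define E where "E = adj F z"
  have sfE: "subfield E" unfolding E_def by (rule adj_subfield[OF sfF alF])
  have FE: "F \<subseteq> E" unfolding E_def by (rule adj_base[OF sfF alF])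
  have zE: "z \<in> E" unfolding E_def by (rule adj_gen[OF sfF alF])
  have KE: "K \<subseteq> E" using KF FE by blast
  obtain \<tau>' where \<tau>': "hom_on (gen E (Rt A)) \<tau>'" "\<forall>u\<in>E. \<tau>' u = \<tau> u"
    using extendS[OF ac sfE \<tau>(1)[folded E_def] finR] algE[OF KE] by blast
  define D where "D = gen E (Rt A)"
  have sfD: "subfield D" unfolding D_def by (rule gen_subfield)
  have ED: "E \<subseteq> D" unfolding D_def by (rule gen_base)
  have ND: "N \<subseteq> D" unfolding N_def D_def by (rule gen_mono[OF KE subset_refl])
  have hom: "hom_on D \<tau>'" using \<tau>'(1) D_def by simp
  have fF: "\<tau>' f = f" if "f \<in> F" for f using \<tau>'(2) \<tau>(2) FE that by auto
  have fx: "\<tau>' k = k" if "k \<in> K" for k using fF KF that by auto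
  have RN: "Rt A \<subseteq> N" unfolding N_def by (rule gen_gens)
  have RR: "\<tau>' ` Rt A \<subseteq> Rt A"
    by (rule hom_Rt[OF sfD hom]) (use KE ED fx RN ND in auto)
  have img: "\<tau>' ` N = N" unfolding N_def
    by (rule normal_image[OF sfD hom fx finR]) (use ND N_def RR in auto)
  have "\<tau>' z = y" using \<tau>'(2) \<tau>(3) zE by simp
  thus ?thesis using sfD hom FE ED ND fF img y(1) N_def by (intro exI[of _ \<tau>'] exI[of _ D]) auto
qed

lemma lin_disj:
  assumes finA: "finite A" and galF: "galois_ext K F" and cap: "gen K (Rt A) \<inter> F = K"
    and finT: "finite T" and TF: "T \<subseteq> F" and li: "lin_indep_over K T"
  shows "(\<forall>t\<in>T. c t \<in> gen K (Rt A)) \<Longrightarrow> (\<Sum>t\<in>T. c t * t) = 0 \<Longrightarrow> \<forall>t\<in>T. c t = 0"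
proof (induction "card {t\<in>T. c t \<noteq> 0}" arbitrary: c rule: less_induct)
  case less
  define N where "N = gen K (Rt A)"
  have sfN: "subfield N" unfolding N_def by (rule gen_subfield)
  have KN: "K \<subseteq> N" unfolding N_def by (rule gen_base)
  have sfF: "subfield F" and KF: "K \<subseteq> F" using galF unfolding galois_ext_def finite_ext_def by auto
  have cN: "c t \<in> N" if "t \<in> T" for t using less.prems(1) that N_def by blast
  show ?case
  proof (rule ccontr)
    assume "\<not> (\<forall>t\<in>T. c t = 0)"
    then obtain t0 where t0: "t0 \<in> T" "c t0 \<noteq> 0" by blast
    define c' where "c' t = c t / c t0" for t
    have c'N: "c' t \<in> N" if "t \<in> T" for t unfolding c'_def using cN that t0(1) sf_divide[OF sfN] by blast
    have c'0: "(\<Sum>t\<in>T. c' t * t) = 0"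
      unfolding c'_def using less.prems(2) by (simp add: sum_divide_distrib[symmetric] times_divide_eq_left)
    have c't0: "c' t0 = 1" unfolding c'_def using t0(2) by simp
    have supp: "{t\<in>T. c' t \<noteq> 0} = {t\<in>T. c t \<noteq> 0}" unfolding c'_def using t0(2) by auto
    show False
    proof (cases "\<forall>t\<in>T. c' t \<in> K")
      case True
      have "c' t0 = 0"
        by (rule li[unfolded lin_indep_over_def, rule_format, of T c']) (use finT True c'0 t0(1) in auto)
      thus False using c't0 by simp
    next
      case False
      then obtain t1 where t1: "t1 \<in> T" "c' t1 \<notin> K" by blast
      have "c' t1 \<notin> F" using t1 c'N cap N_def by blast
      then obtain \<sigma> D where sD: "subfield D" "hom_on D \<sigma>" "F \<subseteq> D" "N \<subseteq> D" "\<forall>f\<in>F. \<sigma> f = f"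
        "\<sigma> ` N \<subseteq> N" "\<sigma> (c' t1) \<noteq> c' t1"
        using moving[OF finA sfF KF, of "c' t1"] c'N[OF t1(1)] N_def by blast
      define d where "d t = \<sigma> (c' t) - c' t" for t
      have cD: "c' t \<in> D" if "t \<in> T" for t using c'N that sD(4) by blast
      have tD: "t \<in> D" if "t \<in> T" for t using TF sD(3) that by blast
      have dN: "\<forall>t\<in>T. d t \<in> gen K (Rt A)"
        unfolding d_def using c'N sD(6) sf_diff[OF sfN] N_def by blast
      have "\<sigma> (\<Sum>t\<in>T. c' t * t) = (\<Sum>t\<in>T. \<sigma> (c' t * t))"
        by (rule hom_sum[OF sD(1,2)]) (use cD tD sf_mult[OF sD(1)] in auto)
      also have "\<dots> = (\<Sum>t\<in>T. \<sigma> (c' t) * t)"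
        using hom_mult[OF sD(2)] cD tD sD(5) TF by (intro sum.cong) auto
      finally have "(\<Sum>t\<in>T. \<sigma> (c' t) * t) = 0" using c'0 hom_0[OF sD(1,2)] by simp
      hence d0: "(\<Sum>t\<in>T. d t * t) = 0" unfolding d_def using c'0
        by (simp add: left_diff_distrib sum_subtractf)
      have "{t\<in>T. d t \<noteq> 0} \<subseteq> {t\<in>T. c t \<noteq> 0} - {t0}"
      proof
        fix t assume t: "t \<in> {t\<in>T. d t \<noteq> 0}"
        have "t \<noteq> t0" using t c't0 hom_1[OF sD(2)] unfolding d_def by auto
        moreover have "c' t \<noteq> 0" using t hom_0[OF sD(1,2)] unfolding d_def by auto
        ultimately show "t \<in> {t\<in>T. c t \<noteq> 0} - {t0}" using t supp by auto
      qed
      hence "card {t\<in>T. d t \<noteq> 0} < card {t\<in>T. c t \<noteq> 0}"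
        using t0 finT by (intro psubset_card_mono) auto
      hence "\<forall>t\<in>T. d t = 0" using less.hyps dN d0 by blast
      thus False using t1(1) sD(7) unfolding d_def by simp
    qed
  qed
qed

end


context ambient
begin

lemma comp_in_span:
  assumes sfX: "subfield X" and KX: "K \<subseteq> X" and sfF: "subfield F"
    and BF: "span_over K BF = F" "BF \<subseteq> F" "finite BF"
  shows "gen K (X \<union> F) \<subseteq> span_over X BF"
proof -
  define V where "V = span_over X BF"
  have ssV: "subsp X V" unfolding V_def by (rule span_subsp[OF sfX])
  have FV: "F \<subseteq> V" unfolding V_def using span_mono_field[OF KX, of BF] BF(1) by simp
  have mulT: "u * t \<in> V" if u: "u \<in> V" and t: "t \<in> BF" for u t
  proof -
    define W where "W = {u. u * t \<in> V}"
    have "subsp X W" using ssV unfolding W_def subsp_def by (auto simp: distrib_right mult.assoc)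
    moreover have "BF \<subseteq> W" unfolding W_def using BF(2) t sf_mult[OF sfF] FV by blast
    ultimately have "span_over X BF \<subseteq> W" by (rule span_least[OF sfX])
    thus ?thesis using u unfolding W_def V_def by blast
  qed
  have mulV: "u * w \<in> V" if u: "u \<in> V" and w: "w \<in> V" for u w
  proof -
    define W where "W = {w. u * w \<in> V}"
    have "subsp X W" using ssV unfolding W_def subsp_def by (auto simp: distrib_left mult.left_commute)
    moreover have "BF \<subseteq> W" unfolding W_def using mulT u by blast
    ultimately have "span_over X BF \<subseteq> W" by (rule span_least[OF sfX])
    thus ?thesis using w unfolding W_def V_def by blast
  qed
  have oneV: "1 \<in> V" using FV sf_1[OF sfF] by blast
  have powV: "a ^ i \<in> V" if "a \<in> V" for a i
    by (induction i) (use oneV mulV that in auto)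
  have XV: "X \<subseteq> V"
  proof
    fix x assume "x \<in> X"
    hence "x * 1 \<in> V" using ssV oneV unfolding subsp_def by blast
    thus "x \<in> V" by simp
  qed
  have genV: "S \<subseteq> BF \<Longrightarrow> gen X S \<subseteq> V" for S
    using finite_subset[of S BF] BF(3)
  proof (induction S rule: infinite_finite_induct)
    case (infinite S) thus ?case using BF(3) finite_subset by blast
  next
    case empty thus ?case using gen_empty[OF sfX] XV by simp
  next
    case (insert a S)
    have sfG: "subfield (gen X S)" by (rule gen_subfield)
    have KG: "K \<subseteq> gen X S" using KX gen_base[of X S] by blast
    have alG: "alg (gen X S) a" by (rule algE[OF KG])
    have GV: "gen X S \<subseteq> V" using insert by auto
    have aV: "a \<in> V" using insert.prems BF(2) FV by blast
    have eq: "gen X (insert a S) = adj (gen X S) a"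
      using gen_insert[of X a S] gen_adj[OF sfG alG] by simp
    show ?case unfolding eq
    proof
      fix z assume "z \<in> adj (gen X S) a"
      then obtain p where p: "Epoly (gen X S) p" "z = poly p a" unfolding adj_def by blast
      have "z = (\<Sum>i\<le>degree p. coeff p i * a ^ i)" using p(2) by (simp add: poly_altdef)
      also have "\<dots> \<in> V"
      proof (rule subsp_sum[OF ssV])
        fix i
        have "coeff p i \<in> V" using p(1) GV unfolding Epoly_def by blast
        thus "coeff p i * a ^ i \<in> V" using mulV powV[OF aV] by blast
      qed
      finally show "z \<in> V" .
    qed
  qed
  have "gen K (X \<union> F) \<subseteq> gen X BF"
  proof (rule gen_least[OF gen_subfield])
    have KG: "K \<subseteq> gen X BF" using KX gen_base[of X BF] by blast
    show "K \<subseteq> gen X BF" by fact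
    have "span_over K BF \<subseteq> gen X BF"
      by (rule span_least[OF sfK subfield_subsp[OF gen_subfield KG]]) (rule gen_gens)
    thus "X \<union> F \<subseteq> gen X BF" using BF(1) gen_base[of X BF] by blast
  qed
  also have "\<dots> \<subseteq> V" by (rule genV) simp
  finally show ?thesis unfolding V_def .
qed

lemma disj_cap:
  assumes finA: "finite A" and galF: "galois_ext K F" and cap: "gen K (Rt A) \<inter> F = K"
    and sfX: "subfield X" and KX: "K \<subseteq> X" and XN: "X \<subseteq> gen K (Rt A)"
    and BF: "finite BF" "BF \<subseteq> F" "lin_indep_over K BF" "span_over K BF = F"
  shows "gen K (X \<union> F) \<inter> gen K (Rt A) = X"
proof
  define N where "N = gen K (Rt A)"
  have sfN: "subfield N" unfolding N_def by (rule gen_subfield)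
  have KN: "K \<subseteq> N" unfolding N_def by (rule gen_base)
  have sfF: "subfield F" using galF unfolding galois_ext_def finite_ext_def by auto
  show "X \<subseteq> gen K (X \<union> F) \<inter> gen K (Rt A)" using XN gen_gens[of "X \<union> F" K] by blast
  show "gen K (X \<union> F) \<inter> gen K (Rt A) \<subseteq> X"
  proof
    fix y assume y: "y \<in> gen K (X \<union> F) \<inter> gen K (Rt A)"
    hence yN: "y \<in> N" using N_def by blast
    have "y \<in> span_over X BF" using comp_in_span[OF sfX KX sfF BF(4,2,1)] y by blast
    then obtain T x where T: "finite T" "T \<subseteq> BF" "\<forall>t\<in>T. x t \<in> X" "y = (\<Sum>t\<in>T. x t * t)"
      unfolding span_over_def by blast
    have "1 \<in> span_over K BF" using BF(4) sf_1[OF sfF] by simp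
    then obtain T' k where T': "finite T'" "T' \<subseteq> BF" "\<forall>t\<in>T'. k t \<in> K" "1 = (\<Sum>t\<in>T'. k t * t)"
      unfolding span_over_def by blast
    define U where "U = T \<union> T'"
    define a where "a t = (if t \<in> T then x t else 0)" for t
    define b where "b t = (if t \<in> T' then k t else 0)" for t
    define e where "e t = a t - y * b t" for t
    have finU: "finite U" using T T' U_def by simp
    have sa: "(\<Sum>t\<in>U. a t * t) = y" unfolding a_def U_def using T(1,4) T'(1) span_sum_restrict[of "T \<union> T'" T x] by simp
    have sb: "(\<Sum>t\<in>U. b t * t) = 1" unfolding b_def U_def using T(1) T'(1,4) span_sum_restrict[of "T \<union> T'" T' k] by simp
    have "(\<Sum>t\<in>U. e t * t) = (\<Sum>t\<in>U. a t * t) - y * (\<Sum>t\<in>U. b t * t)"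
      unfolding e_def by (simp add: left_diff_distrib sum_subtractf sum_distrib_left mult.assoc)
    hence e0: "(\<Sum>t\<in>U. e t * t) = 0" using sa sb by simp
    have aX: "a t \<in> X" for t unfolding a_def using T(3) sf_0[OF sfX] by auto
    have bK: "b t \<in> K" for t unfolding b_def using T'(3) sf_0[OF sfK] by auto
    have eN: "\<forall>t\<in>U. e t \<in> gen K (Rt A)"
      unfolding e_def using aX bK XN KN yN N_def sf_diff[OF sfN] sf_mult[OF sfN] by blast
    have UF: "U \<subseteq> F" using T(2) T'(2) BF(2) U_def by blast
    have liU: "lin_indep_over K U" using lin_indep_subset[OF BF(3)] T(2) T'(2) U_def by blast
    have ez: "\<forall>t\<in>U. e t = 0" by (rule lin_disj[OF finA galF cap finU UF liU eN e0])
    obtain t' where t': "t' \<in> T'" "k t' \<noteq> 0"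
    proof (rule ccontr)
      assume "\<not> thesis"
      hence "\<forall>t\<in>T'. k t = 0" using that by blast
      hence "(\<Sum>t\<in>T'. k t * t) = 0" by simp
      thus False using T'(4) by simp
    qed
    have "e t' = 0" using ez t' U_def by blast
    hence "a t' = y * k t'" unfolding e_def b_def using t' by simp
    hence "y = a t' / k t'" using t'(2) by (simp add: field_simps)
    thus "y \<in> X" using aX bK[of t'] t' KX sf_divide[OF sfX] unfolding b_def by auto
  qed
qed

end


context ambient
begin

lemma conj_in_N:
  assumes E: "E \<in> conj_fields K L" and sfL: "subfield L" and KL: "K \<subseteq> L"
    and BL: "gen K BL = L"
  shows "E \<subseteq> gen K (Rt BL)"
proof -
  obtain \<sigma> where iso: "K_iso K \<sigma> L E" using E unfolding conj_fields_def by blast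
  define N where "N = gen K (Rt BL)"
  have hom: "hom_on L \<sigma>" by (rule iso_hom[OF iso])
  have fx: "\<sigma> k = k" if "k \<in> K" for k using iso_fix[OF iso that] .
  have BLL: "BL \<subseteq> L" using BL gen_gens by blast
  have "L \<subseteq> {z\<in>L. \<sigma> z \<in> N}"
    unfolding BL[symmetric]
  proof (rule gen_least)
    show "subfield {z \<in> gen K BL. \<sigma> z \<in> N}"
      using preimage_subfield[OF sfL hom sfL subset_refl, of N] gen_subfield[of K "Rt BL"] BL N_def by simp
    show "K \<subseteq> {z \<in> gen K BL. \<sigma> z \<in> N}" using fx gen_base[of K BL] gen_base[of K "Rt BL"] N_def by auto
    show "BL \<subseteq> {z \<in> gen K BL. \<sigma> z \<in> N}"
    proof
      fix b assume b: "b \<in> BL"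
      have "\<sigma> b \<in> conjs b" by (rule hom_conj[OF sfL hom KL fx]) (use b BLL in auto)
      hence "\<sigma> b \<in> Rt BL" using b unfolding Rt_def by blast
      thus "b \<in> {z \<in> gen K BL. \<sigma> z \<in> N}" using b gen_gens[of BL K] gen_gens[of "Rt BL" K] N_def by auto
    qed
  qed
  hence "\<sigma> ` L \<subseteq> N" by blast
  thus ?thesis using iso_image[OF iso] N_def by simp
qed

lemma conj_M:
  assumes E: "E \<in> conj_fields K L" and sfL: "subfield L" and KL: "K \<subseteq> L"
    and BF: "finite BF" "gen K BF = F" "F = gen K (Rt BF)"
  shows "gen K (E \<union> F) \<in> conj_fields K (gen K (L \<union> F))"
proof -
  obtain \<sigma> where iso: "K_iso K \<sigma> L E" using E unfolding conj_fields_def by blast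
  have hom: "hom_on L \<sigma>" by (rule iso_hom[OF iso])
  have fx0: "\<sigma> k = k" if "k \<in> K" for k using iso_fix[OF iso that] .
  obtain \<tau> where \<tau>: "hom_on (gen L BF) \<tau>" "\<forall>z\<in>L. \<tau> z = \<sigma> z"
    using extendS[OF ac sfL hom BF(1)] algE[OF KL] by blast
  define D where "D = gen L BF"
  define M where "M = gen K (L \<union> F)"
  define G where "G = gen K (E \<union> F)"
  have sfD: "subfield D" unfolding D_def by (rule gen_subfield)
  have homD: "hom_on D \<tau>" using \<tau>(1) D_def by simp
  have LD: "L \<subseteq> D" unfolding D_def by (rule gen_base)
  have KD: "K \<subseteq> D" using KL LD by blast
  have fx: "\<tau> k = k" if "k \<in> K" for k using \<tau>(2) fx0 KL that by auto
  have FD: "F \<subseteq> D" unfolding BF(2)[symmetric] D_def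
    by (rule gen_mono[OF KL subset_refl])
  have MD: "M \<subseteq> D" unfolding M_def by (rule gen_least[OF sfD KD]) (use LD FD in auto)
  have sfM: "subfield M" unfolding M_def by (rule gen_subfield)
  have KM: "K \<subseteq> M" and LFM: "L \<union> F \<subseteq> M" unfolding M_def by (rule gen_base, rule gen_gens)
  have sfG: "subfield G" unfolding G_def by (rule gen_subfield)
  have KG: "K \<subseteq> G" and EFG: "E \<union> F \<subseteq> G" unfolding G_def by (rule gen_base, rule gen_gens)
  have RF: "Rt BF \<subseteq> F" using BF(3) gen_gens by blast
  have RR: "\<tau> ` Rt BF \<subseteq> Rt BF"
    by (rule hom_Rt[OF sfD homD KD fx]) (use RF FD in auto)
  have finR: "finite (Rt BF)" by (rule Rt_finite[OF BF(1)])
  have tF: "\<tau> ` F = F" using normal_image[OF sfD homD fx finR _ RR] FD BF(3) by simp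
  have "\<tau> ` L = \<sigma> ` L" using \<tau>(2) by (intro image_cong) auto
  hence tL: "\<tau> ` L = E" using iso_image[OF iso] by simp
  have homM: "hom_on M \<tau>" using hom_mono[OF homD MD] .
  have "M \<subseteq> {z\<in>M. \<tau> z \<in> G}"
    unfolding M_def
  proof (rule gen_least)
    show "subfield {z \<in> gen K (L \<union> F). \<tau> z \<in> G}"
      using preimage_subfield[OF sfD homD sfM MD sfG] M_def by simp
    show "K \<subseteq> {z \<in> gen K (L \<union> F). \<tau> z \<in> G}" using fx KM KG M_def by auto
    show "L \<union> F \<subseteq> {z \<in> gen K (L \<union> F). \<tau> z \<in> G}" using LFM EFG tF tL M_def by auto
  qed
  hence sub1: "\<tau> ` M \<subseteq> G" by blast
  have "G \<subseteq> \<tau> ` M"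
    unfolding G_def
  proof (rule gen_least)
    show "subfield (\<tau> ` M)" by (rule hom_image_subfield[OF sfM homM])
    show "K \<subseteq> \<tau> ` M"
    proof
      fix k assume "k \<in> K" thus "k \<in> \<tau> ` M" using fx[of k] KM by (metis image_eqI subsetD)
    qed
    show "E \<union> F \<subseteq> \<tau> ` M" using tF tL LFM by blast
  qed
  hence img: "\<tau> ` M = G" using sub1 by blast
  have "K_iso K \<tau> M G"
  proof (rule K_isoI)
    have "inj_on \<tau> M" using hom_inj[OF sfD homD] MD inj_on_subset by blast
    thus "bij_betw \<tau> M G" using img by (simp add: bij_betw_def)
  qed (use homM fx in auto)
  thus ?thesis unfolding conj_fields_def M_def G_def using sfG KG G_def by blast
qed

end


theorem mainTheorem8:
  fixes K L F M :: "'a::field set" and B :: "'a set set"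
  assumes "is_alg_closure_of K"
    and "perfect_subfield K"
    and "strong_cluster_magnification K L F M"
    and "B \<subseteq> conj_fields K L"
  shows "(minimal_generating_set K L B \<longleftrightarrow>
           minimal_generating_set K M ((\<lambda>E. compositum K {E, F}) ` B))
         \<and> (minimal_generating_set K L B \<longrightarrow>
              card B = card ((\<lambda>E. compositum K {E, F}) ` B))"
proof -
  interpret ambient K using assms(1,2) by unfold_locales
  have feL: "finite_ext K L" and galF: "galois_ext K F" and deg: "ext_degree K L > 2"
    and capL: "galois_closure K L \<inter> F = K" and Mdef: "M = compositum K {L, F}"
    using assms(3) unfolding strong_cluster_magnification_def by auto
  have BC: "B \<subseteq> conj_fields K L" by (rule assms(4))
  have sfL: "subfield L" and KL: "K \<subseteq> L" using feL unfolding finite_ext_def by auto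
  have sfF: "subfield F" and KF: "K \<subseteq> F" using galF unfolding galois_ext_def finite_ext_def by auto
  obtain BL where BL: "finite BL" "BL \<subseteq> L" "gen K BL = L" using fin_ext_basis[OF feL] by blast
  obtain BF where BF: "finite BF" "BF \<subseteq> F" "lin_indep_over K BF" "span_over K BF = F"
    "gen K BF = F" "F = gen K (Rt BF)" using galois_gen[OF galF] by blast
  define N where "N = gen K (Rt BL)"
  have sfN: "subfield N" unfolding N_def by (rule gen_subfield)
  have KN: "K \<subseteq> N" unfolding N_def by (rule gen_base)
  have gcL: "galois_closure K L = N" unfolding N_def
    by (rule galois_closure_eq[OF BL(1,2)]) (use BL(3) in simp)
  have cap: "gen K (Rt BL) \<inter> F = K" using capL gcL N_def by simp
  have LN: "L \<subseteq> N" unfolding N_def using gen_mono[OF subset_refl Rt_base, of K BL] BL(3) by simp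
  have M: "M = gen K (L \<union> F)" using Mdef by (simp add: compositum_gen)
  have LM: "L \<subseteq> M" and FM: "F \<subseteq> M" using gen_gens[of "L \<union> F" K] M by auto
  have MA: "M \<subseteq> gen K (BL \<union> BF)"
  proof -
    have "L \<subseteq> gen K (BL \<union> BF)" using gen_mono[of K K BL "BL \<union> BF"] BL(3) by auto
    moreover have "F \<subseteq> gen K (BL \<union> BF)" using gen_mono[of K K BF "BL \<union> BF"] BF(5) by auto
    ultimately show ?thesis unfolding M by (intro gen_least[OF gen_subfield gen_base]) auto
  qed
  have gcM0: "galois_closure K M = gen K (Rt (BL \<union> BF))"
    by (rule galois_closure_eq) (use BL BF LM FM MA in auto)
  have "gen K (Rt (BL \<union> BF)) = gen K (N \<union> F)"
  proof -
    have "gen K (N \<union> F) = gen K (Rt BL \<union> F)" unfolding N_def by (rule gen_union_gen)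
    also have "\<dots> = gen K (gen K (Rt BF) \<union> Rt BL)" using BF(6) by (simp add: Un_commute)
    also have "\<dots> = gen K (Rt BF \<union> Rt BL)" by (rule gen_union_gen)
    finally show ?thesis by (simp add: Rt_Un Un_commute)
  qed
  hence gcM: "galois_closure K M = gen K (N \<union> F)" using gcM0 by simp
  define \<phi> where "\<phi> = (\<lambda>E. compositum K {E, F})"
  have phi: "\<phi> E = gen K (E \<union> F)" for E unfolding \<phi>_def by (simp add: compositum_gen)
  have phiN: "\<phi> N = galois_closure K M" using gcM phi by simp
  have capX: "\<phi> X \<inter> N = X" if "subfield X" "K \<subseteq> X" "X \<subseteq> N" for X
    using disj_cap[OF BL(1) galF cap that[unfolded N_def] BF(1-4)] phi N_def by simp
  have XN_iff: "X = N \<longleftrightarrow> \<phi> X = \<phi> N" if "subfield X" "K \<subseteq> X" "X \<subseteq> N" for X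
    using capX[OF that] capX[OF sfN KN subset_refl] by metis
  have conjN: "E \<subseteq> N" if "E \<in> conj_fields K L" for E
    using conj_in_N[OF that sfL KL BL(3)] N_def by simp
  have conjsf: "subfield E" "K \<subseteq> E" if "E \<in> conj_fields K L" for E
    using that unfolding conj_fields_def by auto
  have inj: "inj_on \<phi> (conj_fields K L)"
  proof (rule inj_onI)
    fix E1 E2 assume E: "E1 \<in> conj_fields K L" "E2 \<in> conj_fields K L" "\<phi> E1 = \<phi> E2"
    have "E1 = \<phi> E1 \<inter> N" using capX[OF conjsf[OF E(1)] conjN[OF E(1)]] by simp
    also have "\<dots> = \<phi> E2 \<inter> N" using E(3) by simp
    also have "\<dots> = E2" using capX[OF conjsf[OF E(2)] conjN[OF E(2)]] by simp
    finally show "E1 = E2" .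
  qed
  have phiM: "\<phi> E \<in> conj_fields K M" if "E \<in> conj_fields K L" for E
    unfolding phi M by (rule conj_M[OF that sfL KL BF(1,5,6)])
  have CB: "subfield (compositum K B') \<and> K \<subseteq> compositum K B' \<and> compositum K B' \<subseteq> N"
    if "B' \<subseteq> conj_fields K L" for B'
  proof -
    have "\<Union>B' \<subseteq> N" using conjN that by blast
    hence "gen K (\<Union>B') \<subseteq> N" by (rule gen_least[OF sfN KN])
    thus ?thesis unfolding compositum_gen using gen_subfield gen_base by blast
  qed
  have comp_img: "compositum K (\<phi> ` B') = \<phi> (compositum K B')" if ne: "B' \<noteq> {}" for B'
  proof -
    have "\<phi> (compositum K B') = gen K (\<Union>B' \<union> F)"
      unfolding phi compositum_gen by (rule gen_union_gen)
    moreover have "compositum K (\<phi> ` B') = gen K (\<Union>B' \<union> F)"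
      unfolding compositum_gen
    proof (rule antisym)
      show "gen K (\<Union> (\<phi> ` B')) \<subseteq> gen K (\<Union> B' \<union> F)"
      proof (rule gen_least[OF gen_subfield gen_base])
        show "\<Union> (\<phi> ` B') \<subseteq> gen K (\<Union> B' \<union> F)"
          unfolding phi using gen_mono[of K K] by (metis (no_types, lifting) Sup_upper UN_subset_iff Un_mono subset_refl)
      qed
      show "gen K (\<Union> B' \<union> F) \<subseteq> gen K (\<Union> (\<phi> ` B'))"
      proof (rule gen_mono[OF subset_refl])
        obtain E0 where "E0 \<in> B'" using ne by blast
        have "\<And>E. E \<subseteq> \<phi> E" "\<And>E. F \<subseteq> \<phi> E" unfolding phi using gen_gens by blast+
        thus "\<Union> B' \<union> F \<subseteq> \<Union> (\<phi> ` B')" using \<open>E0 \<in> B'\<close> by blast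
      qed
    qed
    ultimately show ?thesis by simp
  qed
  obtain l where l: "l \<in> L" "l \<notin> K" using degree_gt2_not_sub[OF feL deg] by blast
  have c0: "compositum K {} = K" unfolding compositum_gen using gen_empty[OF sfK] by simp
  have NK: "N \<noteq> K" using l LN by blast
  have MK: "galois_closure K M \<noteq> K"
  proof -
    have "L \<subseteq> galois_closure K M" using gcM LN gen_gens[of "N \<union> F" K] by auto
    thus ?thesis using l by blast
  qed
  have fwd: "minimal_generating_set K M (\<phi> ` B)" if mg: "minimal_generating_set K L B"
  proof -
    have cB: "compositum K B = N" and minB: "\<forall>B'. B' \<subset> B \<longrightarrow> compositum K B' \<noteq> N"
      using mg gcL unfolding minimal_generating_set_def by auto
    have Bne: "B \<noteq> {}" using cB c0 NK by auto
    have "\<phi> ` B \<subseteq> conj_fields K M" using phiM BC by blast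
    moreover have "compositum K (\<phi> ` B) = galois_closure K M" using comp_img[OF Bne] cB phiN by simp
    moreover have "\<forall>B''. B'' \<subset> \<phi> ` B \<longrightarrow> compositum K B'' \<noteq> galois_closure K M"
    proof (intro allI impI)
      fix B'' assume sub: "B'' \<subset> \<phi> ` B"
      define B1 where "B1 = {E\<in>B. \<phi> E \<in> B''}"
      have B''eq: "B'' = \<phi> ` B1" unfolding B1_def using sub by blast
      have B1sub: "B1 \<subset> B" using sub B''eq unfolding B1_def by blast
      show "compositum K B'' \<noteq> galois_closure K M"
      proof (cases "B1 = {}")
        case True thus ?thesis using B''eq c0 MK by simp
      next
        case False
        have C1: "subfield (compositum K B1)" "K \<subseteq> compositum K B1" "compositum K B1 \<subseteq> N"
          using CB[of B1] B1sub BC by auto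
        have "compositum K B1 \<noteq> N" using B1sub by (rule minB[rule_format])
        hence "\<phi> (compositum K B1) \<noteq> \<phi> N" using XN_iff[OF C1] by blast
        thus ?thesis using B''eq comp_img[OF False] phiN by simp
      qed
    qed
    ultimately show ?thesis unfolding minimal_generating_set_def by blast
  qed
  have bwd: "minimal_generating_set K L B" if mg: "minimal_generating_set K M (\<phi> ` B)"
  proof -
    have cB: "compositum K (\<phi> ` B) = galois_closure K M"
      and minB: "\<forall>B'. B' \<subset> \<phi> ` B \<longrightarrow> compositum K B' \<noteq> galois_closure K M"
      using mg unfolding minimal_generating_set_def by auto
    have Bne: "B \<noteq> {}" using cB c0 MK by auto
    have C: "subfield (compositum K B)" "K \<subseteq> compositum K B" "compositum K B \<subseteq> N" using CB[OF BC] by auto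
    have "\<phi> (compositum K B) = \<phi> N" using cB comp_img[OF Bne] phiN by simp
    hence cBN: "compositum K B = N" using XN_iff[OF C] by blast
    have "\<forall>B'. B' \<subset> B \<longrightarrow> compositum K B' \<noteq> N"
    proof (intro allI impI notI)
      fix B1 assume B1: "B1 \<subset> B" and c1: "compositum K B1 = N"
      have B1ne: "B1 \<noteq> {}" using c1 c0 NK by auto
      have "inj_on \<phi> B" using inj BC inj_on_subset by blast
      hence "\<phi> ` B1 \<subset> \<phi> ` B" using B1 by (rule image_strict_mono)
      hence ne: "compositum K (\<phi> ` B1) \<noteq> galois_closure K M" by (rule minB[rule_format])
      have "compositum K (\<phi> ` B1) = \<phi> (compositum K B1)" by (rule comp_img[OF B1ne])
      also have "\<dots> = \<phi> N" by (simp only: c1)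
      also have "\<dots> = galois_closure K M" by (rule phiN)
      finally show False using ne by contradiction
    qed
    thus ?thesis unfolding minimal_generating_set_def using BC cBN gcL by simp
  qed
  have crd: "card B = card (\<phi> ` B)"
    using card_image[OF inj_on_subset[OF inj BC]] by simp
  show ?thesis using fwd bwd crd unfolding \<phi>_def by blast
qed


end
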